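(* Let $P_0=\mathcal{N}(m_0,\sigma_0^2)$ and $P_1=\mathcal{N}(m_1,\sigma_1^2)$ be univariate Gaussian measures with $m_i\in\mathbb{R}$ and $\sigma_i^2>0$, $i=0,1$. Set $F(t,x,y,z)=(1-t)x+ty+\sqrt{2t(1-t)}\,z$ and $Q=\mathcal{N}(0,\sigma_0\sigma_1)$. Then $(F,Q)\in\mathcal{F}_{\mathrm{SL}}(P_0,P_1)$.
   Context: $\mathcal{N}(m,s)$ denotes the Gaussian with mean $m$ and variance $s$ (here $\sigma_i>0$). Fix $1\le p<2$. A base interpolation path is a Borel map $F:[0,1]\times\mathbb{R}^{2d+\ell}\to\mathbb{R}^d$ with $t\mapsto F(t,x,y,z)\in W^{1,p}$, $F(0,x,y,z)=x$, $F(1,x,y,z)=y$ for a.e. $(x,y,z)$. A generalized interpolant is $(F,Q)$ with $Q$ absolutely continuous on $\mathbb{R}^\ell$, inducing $X_t=F(t,X_0,X_1,Z)$ with $(X_0,X_1,Z)\sim P_0\otimes P_1\otimes Q$. $\mathcal{S}(P_0,P_1)$: processes with a.s. continuous paths and $(X_0,X_1)\sim P_0\otimes P_1$. $\mathcal{S}_{\mathrm{SL}}(P_0,P_1)$ (for absolutely continuous $P_0,P_1$): those $X\in\mathcal{S}(P_0,P_1)$ whose conditional velocity $v(t,x)=\mathbb{E}[\dot X_t\mid X_t=x]$ is well defined, jointly measurable, Lipschitz in $x$ uniformly in $t$, and whose flow map ($\partial_t\phi=v(t,\phi)$, $\phi(0,x)=x$) satisfies $\partial_t^2\phi\equiv0$.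 $\mathcal{F}_{\mathrm{SL}}(P_0,P_1)$: generalized interpolants whose induced process is in $\mathcal{S}_{\mathrm{SL}}(P_0,P_1)$. *)

theory Defs
  imports "HOL-Probability.Probability"
begin

text \<open>Univariate setting d = 1, latent dimension l = 1.
  N(m, s) below is parametrised by the standard deviation, as in the library:
  gauss m sd is the Gaussian with mean m and variance sd^2.\<close>

definition gauss :: "real \<Rightarrow> real \<Rightarrow> real measure" where
  "gauss m sd = density lborel (normal_density m sd)"

text \<open>Sobolev space W^{1,p}(0,1) (as a.e.-classes): f agrees a.e. on [0,1] with
  c + integral from 0 to t of g, for some g in L^p(0,1).\<close>

definition W1p :: "real \<Rightarrow> (real \<Rightarrow> real) \<Rightarrow> bool" where
  "W1p p f \<longleftrightarrow> (\<exists>g c. g \<in> borel_measurable lborel \<and>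
      set_integrable lborel {0..1} (\<lambda>s. \<bar>g s\<bar> powr p) \<and>
      set_integrable lborel {0..1} g \<and>
      (AE t in lborel. t \<in> {0..1} \<longrightarrow> f t = c + (LINT s:{0..t}|lborel. g s)))"

definition base_interp_path :: "real \<Rightarrow> (real \<Rightarrow> real \<Rightarrow> real \<Rightarrow> real \<Rightarrow> real) \<Rightarrow> bool" where
  "base_interp_path p F \<longleftrightarrow>
     (\<lambda>(t, x, y, z). F t x y z) \<in> borel_measurable (restrict_space borel ({0..1} \<times> UNIV)) \<and>
     (AE w in (lborel :: (real \<times> real \<times> real) measure).
        W1p p (\<lambda>t. F t (fst w) (fst (snd w)) (snd (snd w))) \<and>
        F 0 (fst w) (fst (snd w)) (snd (snd w)) = fst w \<and>
        F 1 (fst w) (fst (snd w)) (snd (snd w)) = fst (snd w))"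

definition gen_interpolant :: "real \<Rightarrow> (real \<Rightarrow> real \<Rightarrow> real \<Rightarrow> real \<Rightarrow> real) \<Rightarrow> real measure \<Rightarrow> bool" where
  "gen_interpolant p F Q \<longleftrightarrow> base_interp_path p F \<and> prob_space Q \<and>
     sets Q = sets borel \<and> absolutely_continuous lborel Q"

definition induced_space :: "real measure \<Rightarrow> real measure \<Rightarrow> real measure \<Rightarrow> (real \<times> real \<times> real) measure" where
  "induced_space P0 P1 Q = P0 \<Otimes>\<^sub>M (P1 \<Otimes>\<^sub>M Q)"

definition induced_process :: "(real \<Rightarrow> real \<Rightarrow> real \<Rightarrow> real \<Rightarrow> real) \<Rightarrow> real \<Rightarrow> real \<times> real \<times> real \<Rightarrow> real" where
  "induced_process F t w = F t (fst w) (fst (snd w)) (snd (snd w))"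

definition in_S :: "'w measure \<Rightarrow> (real \<Rightarrow> 'w \<Rightarrow> real) \<Rightarrow> real measure \<Rightarrow> real measure \<Rightarrow> bool" where
  "in_S M X P0 P1 \<longleftrightarrow> prob_space M \<and>
     (\<forall>t\<in>{0..1}. X t \<in> borel_measurable M) \<and>
     (AE \<omega> in M. continuous_on {0..1} (\<lambda>t. X t \<omega>)) \<and>
     distr M (borel \<Otimes>\<^sub>M borel) (\<lambda>\<omega>. (X 0 \<omega>, X 1 \<omega>)) = P0 \<Otimes>\<^sub>M P1"

definition velocity :: "(real \<Rightarrow> 'w \<Rightarrow> real) \<Rightarrow> real \<Rightarrow> 'w \<Rightarrow> real" where
  "velocity X t \<omega> = deriv (\<lambda>s. X s \<omega>) t"

text \<open>v is (a version of) the conditional velocity E[dX_t | X_t = x]: for a.e. t,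
  the velocity is defined a.s. and integrable, and v(t, X_t) is the conditional
  expectation of the velocity given sigma(X_t).\<close>

definition is_cond_velocity :: "'w measure \<Rightarrow> (real \<Rightarrow> 'w \<Rightarrow> real) \<Rightarrow> (real \<Rightarrow> real \<Rightarrow> real) \<Rightarrow> bool" where
  "is_cond_velocity M X v \<longleftrightarrow>
     (AE t in lborel. t \<in> {0..1} \<longrightarrow>
        (AE \<omega> in M. (\<lambda>s. X s \<omega>) differentiable (at t)) \<and>
        integrable M (velocity X t) \<and>
        (AE \<omega> in M. real_cond_exp M (vimage_algebra (space M) (X t) borel) (velocity X t) \<omega>
                      = v t (X t \<omega>)))"

text \<open>phi is a flow map of v on [0,1]: d/dt phi = v(t, phi), phi(0,x) = x
  (in integral / Caratheodory form, since v is only measurable in t).\<close>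

definition is_flow :: "(real \<Rightarrow> real \<Rightarrow> real) \<Rightarrow> (real \<Rightarrow> real \<Rightarrow> real) \<Rightarrow> bool" where
  "is_flow v \<phi> \<longleftrightarrow> (\<forall>x. \<forall>t\<in>{0..1}.
      set_integrable lborel {0..t} (\<lambda>s. v s (\<phi> s x)) \<and>
      \<phi> t x = x + (LINT s:{0..t}|lborel. v s (\<phi> s x)))"

definition second_deriv_zero :: "(real \<Rightarrow> real \<Rightarrow> real) \<Rightarrow> bool" where
  "second_deriv_zero \<phi> \<longleftrightarrow> (\<forall>x. \<exists>d.
      (\<forall>t\<in>{0..1}. ((\<lambda>s. \<phi> s x) has_real_derivative d t) (at t within {0..1})) \<and>
      (\<forall>t\<in>{0..1}. (d has_real_derivative 0) (at t within {0..1})))"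

definition in_S_SL :: "'w measure \<Rightarrow> (real \<Rightarrow> 'w \<Rightarrow> real) \<Rightarrow> real measure \<Rightarrow> real measure \<Rightarrow> bool" where
  "in_S_SL M X P0 P1 \<longleftrightarrow>
     sets P0 = sets borel \<and> absolutely_continuous lborel P0 \<and>
     sets P1 = sets borel \<and> absolutely_continuous lborel P1 \<and>
     in_S M X P0 P1 \<and>
     (\<exists>v. is_cond_velocity M X v \<and>
          (\<lambda>(t, x). v t x) \<in> borel_measurable (restrict_space borel ({0..1} \<times> UNIV)) \<and>
          (\<exists>L. \<forall>t\<in>{0..1}. L-lipschitz_on UNIV (v t)) \<and>
          (\<exists>\<phi>. is_flow v \<phi>) \<and>
          (\<forall>\<phi>. is_flow v \<phi> \<longrightarrow> second_deriv_zero \<phi>))"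

definition in_F_SL :: "real \<Rightarrow> (real \<Rightarrow> real \<Rightarrow> real \<Rightarrow> real \<Rightarrow> real) \<Rightarrow> real measure \<Rightarrow>
    real measure \<Rightarrow> real measure \<Rightarrow> bool" where
  "in_F_SL p F Q P0 P1 \<longleftrightarrow> gen_interpolant p F Q \<and>
     in_S_SL (induced_space P0 P1 Q) (induced_process F) P0 P1"

end

theory Submission
  imports Defs
begin


lemma sets_gauss[simp, measurable_cong]: "sets (gauss m s) = sets borel"
  by (simp add: gauss_def)

lemma space_gauss[simp]: "space (gauss m s) = UNIV"
  by (simp add: gauss_def)

lemma prob_space_gauss: "0 < s \<Longrightarrow> prob_space (gauss m s)"
  unfolding gauss_def by (rule prob_space_normal_density)

lemma integrable_gauss_id: "0 < s \<Longrightarrow> integrable (gauss m s) (\<lambda>x. x)"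
  unfolding gauss_def
  by (subst integrable_density) (auto simp: integrable_normal_moment_nz_1)

lemma integral_gauss_id: "0 < s \<Longrightarrow> integral\<^sup>L (gauss m s) (\<lambda>x. x) = m"
  unfolding gauss_def
  by (subst integral_density) (auto simp: integral_normal_moment_nz_1)

lemma gauss_affine:
  assumes "0 < \<sigma>" "\<alpha> \<noteq> 0"
  shows "distr (gauss \<mu> \<sigma>) borel (\<lambda>x. \<beta> + \<alpha> * x) = gauss (\<beta> + \<alpha> * \<mu>) (\<bar>\<alpha>\<bar> * \<sigma>)"
proof -
  interpret prob_space "gauss \<mu> \<sigma>" using prob_space_gauss[OF assms(1)] .
  have d: "distributed (gauss \<mu> \<sigma>) lborel (\<lambda>x. x) (normal_density \<mu> \<sigma>)"
    unfolding distributed_def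
    by (auto simp: distr_id2 gauss_def)
  have "distributed (gauss \<mu> \<sigma>) lborel (\<lambda>x. \<beta> + \<alpha> * x) (normal_density (\<beta> + \<alpha> * \<mu>) (\<bar>\<alpha>\<bar> * \<sigma>))"
    using normal_density_affine[OF d assms] .
  then have "distr (gauss \<mu> \<sigma>) lborel (\<lambda>x. \<beta> + \<alpha> * x) = gauss (\<beta> + \<alpha> * \<mu>) (\<bar>\<alpha>\<bar> * \<sigma>)"
    by (simp add: distributed_def gauss_def)
  moreover have "distr (gauss \<mu> \<sigma>) borel (\<lambda>x. \<beta> + \<alpha> * x) = distr (gauss \<mu> \<sigma>) lborel (\<lambda>x. \<beta> + \<alpha> * x)"
    by (rule distr_cong) auto
  ultimately show ?thesis by simp
qed

lemma distr_pair_snd':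
  assumes "prob_space M1" "sigma_finite_measure M2"
  shows "distr (M1 \<Otimes>\<^sub>M M2) M2 snd = M2"
proof -
  interpret M1: prob_space M1 by fact
  interpret M2: sigma_finite_measure M2 by fact
  interpret pair_sigma_finite M1 M2 ..
  have "distr (M1 \<Otimes>\<^sub>M M2) M2 snd = distr (distr (M2 \<Otimes>\<^sub>M M1) (M1 \<Otimes>\<^sub>M M2) (\<lambda>(x, y). (y, x))) M2 snd"
    by (simp add: distr_pair_swap[symmetric])
  also have "\<dots> = distr (M2 \<Otimes>\<^sub>M M1) M2 (\<lambda>x. snd (case x of (x, y) \<Rightarrow> (y, x)))"
    by (subst distr_distr) (auto simp: comp_def)
  also have "\<dots> = distr (M2 \<Otimes>\<^sub>M M1) M2 fst"
    by (rule distr_cong) auto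
  also have "\<dots> = M2" using M1.distr_pair_fst .
  finally show ?thesis .
qed

lemma integrable_pair_fst:
  assumes "prob_space M2" "sigma_finite_measure M1" "integrable M1 f"
  shows "integrable (M1 \<Otimes>\<^sub>M M2) (\<lambda>w. f (fst w :: _) :: real)"
proof -
  interpret M2: prob_space M2 by fact
  have f[measurable]: "f \<in> borel_measurable M1" using assms(3) by auto
  have "integrable (distr (M1 \<Otimes>\<^sub>M M2) M1 fst) f" using M2.distr_pair_fst[of M1] assms(3) by simp
  then show ?thesis by (subst (asm) integrable_distr_eq) auto
qed

lemma integrable_pair_snd:
  assumes "prob_space M1" "sigma_finite_measure M2" "integrable M2 f"
  shows "integrable (M1 \<Otimes>\<^sub>M M2) (\<lambda>w. f (snd w :: _) :: real)"
proof -
  have f[measurable]: "f \<in> borel_measurable M2" using assms(3) by auto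
  have "integrable (distr (M1 \<Otimes>\<^sub>M M2) M2 snd) f" using distr_pair_snd'[OF assms(1,2)] assms(3) by simp
  then show ?thesis by (subst (asm) integrable_distr_eq) auto
qed



lemma normal_factor:
  assumes [arith]: "0 < \<sigma>" "0 < \<tau>"
  shows "normal_density 0 \<sigma> (x - y) * normal_density 0 \<tau> y =
    normal_density 0 (sqrt (\<sigma>\<^sup>2 + \<tau>\<^sup>2)) x *
    normal_density (\<tau>\<^sup>2 * x / (\<sigma>\<^sup>2 + \<tau>\<^sup>2)) (sqrt ((\<sigma>\<^sup>2 * \<tau>\<^sup>2) / (\<sigma>\<^sup>2 + \<tau>\<^sup>2))) y"
proof -
  define \<sigma>' \<tau>' where "\<sigma>' = \<sigma>\<^sup>2" and "\<tau>' = \<tau>\<^sup>2"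
  then have [simp, arith]: "0 < \<sigma>'" "0 < \<tau>'"
    by simp_all
  have sqrt: "(sqrt (2 * pi * (\<sigma>' + \<tau>')) * sqrt (2 * pi * (\<sigma>' * \<tau>') / (\<sigma>' + \<tau>'))) =
    (sqrt (2 * pi * \<sigma>') * sqrt (2 * pi * \<tau>'))"
    by (subst power_eq_iff_eq_base[symmetric, where n=2])
       (simp_all add: real_sqrt_mult[symmetric] power2_eq_square)
  show ?thesis
    apply (simp add: normal_density_def \<sigma>'_def[symmetric] \<tau>'_def[symmetric] sqrt mult_exp_exp)
    apply (simp add: divide_simps power2_eq_square)
    apply (simp add: algebra_simps)
    done
qed

definition nfac :: "real \<Rightarrow> real \<Rightarrow> real \<Rightarrow> real \<Rightarrow> real" where
  "nfac \<sigma> \<tau> s r = normal_density 0 (sqrt (\<sigma>\<^sup>2 + \<tau>\<^sup>2)) s *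
    normal_density (\<tau>\<^sup>2 * s / (\<sigma>\<^sup>2 + \<tau>\<^sup>2)) (sqrt ((\<sigma>\<^sup>2 * \<tau>\<^sup>2) / (\<sigma>\<^sup>2 + \<tau>\<^sup>2))) r"

lemma nfac_nonneg: "0 \<le> nfac \<sigma> \<tau> s r"
  by (simp add: nfac_def)

lemma nfac_measurable[measurable]: "(\<lambda>(s, r). nfac \<sigma> \<tau> s r) \<in> borel_measurable (borel \<Otimes>\<^sub>M borel)"
  unfolding nfac_def normal_density_def by measurable

lemma gauss_pair: "0 < \<tau> \<Longrightarrow> gauss a \<sigma> \<Otimes>\<^sub>M gauss b \<tau> =
   density (lborel \<Otimes>\<^sub>M lborel) (\<lambda>(x, y). ennreal (normal_density a \<sigma> x) * ennreal (normal_density b \<tau> y))"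
  unfolding gauss_def
  apply (rule pair_measure_density)
  using prob_space_gauss[of \<tau> b] unfolding gauss_def
  by (auto intro: lborel.sigma_finite_measure_axioms prob_space_imp_sigma_finite)

lemma gauss_shear:
  assumes "0 < \<sigma>" "0 < \<tau>"
  shows "distr (gauss 0 \<sigma> \<Otimes>\<^sub>M gauss 0 \<tau>) (borel \<Otimes>\<^sub>M borel) (\<lambda>(u, r). (u + r, r)) =
    density (lborel \<Otimes>\<^sub>M lborel) (\<lambda>(s, r). ennreal (nfac \<sigma> \<tau> s r))"
proof (rule measure_eqI)
  show "sets (distr (gauss 0 \<sigma> \<Otimes>\<^sub>M gauss 0 \<tau>) (borel \<Otimes>\<^sub>M borel) (\<lambda>(u, r). (u + r, r))) =
    sets (density (lborel \<Otimes>\<^sub>M lborel) (\<lambda>(s, r). ennreal (nfac \<sigma> \<tau> s r)))"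
    by (simp add: sets_pair_measure_cong[OF sets_lborel sets_lborel])
  fix A assume "A \<in> sets (distr (gauss 0 \<sigma> \<Otimes>\<^sub>M gauss 0 \<tau>) (borel \<Otimes>\<^sub>M borel) (\<lambda>(u, r). (u + r, r)))"
  then have A[measurable]: "A \<in> sets (borel \<Otimes>\<^sub>M borel)" by simp
  have T[measurable]: "(\<lambda>(u, r). (u + r, r)) \<in> measurable (gauss 0 \<sigma> \<Otimes>\<^sub>M gauss 0 \<tau>) (borel \<Otimes>\<^sub>M borel)"
    by measurable
  have "emeasure (distr (gauss 0 \<sigma> \<Otimes>\<^sub>M gauss 0 \<tau>) (borel \<Otimes>\<^sub>M borel) (\<lambda>(u, r). (u + r, r))) A =
     (\<integral>\<^sup>+ w. indicator A w \<partial>(distr (gauss 0 \<sigma> \<Otimes>\<^sub>M gauss 0 \<tau>) (borel \<Otimes>\<^sub>M borel) (\<lambda>(u, r). (u + r, r))))"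
    using A by simp
  also have "\<dots> = (\<integral>\<^sup>+ w. indicator A (fst w + snd w, snd w) \<partial>(gauss 0 \<sigma> \<Otimes>\<^sub>M gauss 0 \<tau>))"
    by (subst nn_integral_distr) (auto simp: case_prod_beta)
  also have "\<dots> = (\<integral>\<^sup>+ w. ennreal (normal_density 0 \<sigma> (fst w)) * ennreal (normal_density 0 \<tau> (snd w)) *
       indicator A (fst w + snd w, snd w) \<partial>(lborel \<Otimes>\<^sub>M lborel))"
    unfolding gauss_pair[OF assms(2)]
    by (subst nn_integral_density) (auto simp: case_prod_beta)
  also have "\<dots> = (\<integral>\<^sup>+ r. \<integral>\<^sup>+ u. ennreal (normal_density 0 \<sigma> u) * ennreal (normal_density 0 \<tau> r) *
       indicator A (u + r, r) \<partial>lborel \<partial>lborel)"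
    by (subst lborel_pair.nn_integral_snd[symmetric]) auto
  also have "\<dots> = (\<integral>\<^sup>+ r. \<integral>\<^sup>+ s. ennreal (normal_density 0 \<sigma> (s - r)) * ennreal (normal_density 0 \<tau> r) *
       indicator A (s, r) \<partial>lborel \<partial>lborel)"
  proof (rule nn_integral_cong)
    fix r :: real
    show "(\<integral>\<^sup>+ u. ennreal (normal_density 0 \<sigma> u) * ennreal (normal_density 0 \<tau> r) * indicator A (u + r, r) \<partial>lborel) =
      (\<integral>\<^sup>+ s. ennreal (normal_density 0 \<sigma> (s - r)) * ennreal (normal_density 0 \<tau> r) * indicator A (s, r) \<partial>lborel)"
      by (subst nn_integral_real_affine[where c=1 and t="-r"]) auto
  qed
  also have "\<dots> = (\<integral>\<^sup>+ r. \<integral>\<^sup>+ s. ennreal (nfac \<sigma> \<tau> s r) * indicator A (s, r) \<partial>lborel \<partial>lborel)"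
    by (intro nn_integral_cong)
       (simp add: nfac_def normal_factor[OF assms] ennreal_mult'[symmetric])
  also have "\<dots> = (\<integral>\<^sup>+ w. ennreal (nfac \<sigma> \<tau> (fst w) (snd w)) * indicator A w \<partial>(lborel \<Otimes>\<^sub>M lborel))"
    by (subst lborel_pair.nn_integral_snd[symmetric]) auto
  also have "\<dots> = emeasure (density (lborel \<Otimes>\<^sub>M lborel) (\<lambda>(s, r). ennreal (nfac \<sigma> \<tau> s r))) A"
    by (subst emeasure_density) (auto simp: case_prod_beta)
  finally show "emeasure (distr (gauss 0 \<sigma> \<Otimes>\<^sub>M gauss 0 \<tau>) (borel \<Otimes>\<^sub>M borel) (\<lambda>(u, r). (u + r, r))) A =
    emeasure (density (lborel \<Otimes>\<^sub>M lborel) (\<lambda>(s, r). ennreal (nfac \<sigma> \<tau> s r))) A" .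
qed



lemma integrable_pair_gauss_lin:
  assumes "0 < \<sigma>" "0 < \<tau>"
  shows "integrable (gauss a \<sigma> \<Otimes>\<^sub>M gauss b \<tau>) (\<lambda>w. \<alpha> * \<bar>fst w\<bar> + \<beta> * \<bar>snd w\<bar>)"
proof -
  have s1: "sigma_finite_measure (gauss a \<sigma>)" "sigma_finite_measure (gauss b \<tau>)"
    using prob_space_gauss assms by (auto intro: prob_space_imp_sigma_finite)
  have "integrable (gauss a \<sigma> \<Otimes>\<^sub>M gauss b \<tau>) (\<lambda>w. \<bar>fst w\<bar>)"
    by (rule integrable_pair_fst[where f="\<lambda>x. \<bar>x\<bar>"]) (use assms s1 prob_space_gauss integrable_gauss_id in auto)
  moreover have "integrable (gauss a \<sigma> \<Otimes>\<^sub>M gauss b \<tau>) (\<lambda>w. \<bar>snd w\<bar>)"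
    by (rule integrable_pair_snd[where f="\<lambda>x. \<bar>x\<bar>"]) (use assms s1 prob_space_gauss integrable_gauss_id in auto)
  ultimately show ?thesis by auto
qed

lemma core_gauss:
  assumes pos: "0 < \<sigma>" "0 < \<tau>"
    and h[measurable]: "h \<in> borel_measurable borel" and hb: "\<And>s. \<bar>h s\<bar> \<le> 1"
  shows "integrable (gauss 0 \<sigma> \<Otimes>\<^sub>M gauss 0 \<tau>) (\<lambda>w. (\<tau>\<^sup>2 * fst w - \<sigma>\<^sup>2 * snd w) * h (fst w + snd w))"
    and "integral\<^sup>L (gauss 0 \<sigma> \<Otimes>\<^sub>M gauss 0 \<tau>) (\<lambda>w. (\<tau>\<^sup>2 * fst w - \<sigma>\<^sup>2 * snd w) * h (fst w + snd w)) = 0"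
proof -
  let ?G = "gauss 0 \<sigma> \<Otimes>\<^sub>M gauss 0 \<tau>"
  let ?T = "\<lambda>(u::real, r::real). (u + r, r)"
  define K' where "K' = (\<lambda>w::real\<times>real. (\<tau>\<^sup>2 * (fst w - snd w) - \<sigma>\<^sup>2 * snd w) * h (fst w))"
  have K'[measurable]: "K' \<in> borel_measurable (borel \<Otimes>\<^sub>M borel)" unfolding K'_def by measurable
  have T[measurable]: "?T \<in> measurable ?G (borel \<Otimes>\<^sub>M borel)" by measurable
  have eqK: "(\<lambda>w. (\<tau>\<^sup>2 * fst w - \<sigma>\<^sup>2 * snd w) * h (fst w + snd w)) = (\<lambda>w. K' (?T w))"
    by (auto simp: K'_def fun_eq_iff case_prod_beta)
  show int: "integrable ?G (\<lambda>w. (\<tau>\<^sup>2 * fst w - \<sigma>\<^sup>2 * snd w) * h (fst w + snd w))"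
  proof (rule Bochner_Integration.integrable_bound[OF integrable_pair_gauss_lin[OF pos, of 0 0 "\<tau>\<^sup>2" "\<sigma>\<^sup>2"]])
    show "(\<lambda>w. (\<tau>\<^sup>2 * fst w - \<sigma>\<^sup>2 * snd w) * h (fst w + snd w)) \<in> borel_measurable ?G"
      by measurable
    show "AE x in ?G. norm ((\<tau>\<^sup>2 * fst x - \<sigma>\<^sup>2 * snd x) * h (fst x + snd x)) \<le> norm (\<tau>\<^sup>2 * \<bar>fst x\<bar> + \<sigma>\<^sup>2 * \<bar>snd x\<bar>)"
    proof (rule AE_I2)
      fix x :: "real \<times> real"
      have "\<bar>(\<tau>\<^sup>2 * fst x - \<sigma>\<^sup>2 * snd x) * h (fst x + snd x)\<bar> \<le> \<bar>\<tau>\<^sup>2 * fst x - \<sigma>\<^sup>2 * snd x\<bar> * 1"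
        unfolding abs_mult by (rule mult_left_mono) (use hb in auto)
      also have "\<dots> \<le> \<tau>\<^sup>2 * \<bar>fst x\<bar> + \<sigma>\<^sup>2 * \<bar>snd x\<bar>"
        by (simp add: abs_mult abs_triangle_ineq4[THEN order_trans])
      finally show "norm ((\<tau>\<^sup>2 * fst x - \<sigma>\<^sup>2 * snd x) * h (fst x + snd x)) \<le> norm (\<tau>\<^sup>2 * \<bar>fst x\<bar> + \<sigma>\<^sup>2 * \<bar>snd x\<bar>)"
        by simp
    qed
  qed
  have intD: "integrable (distr ?G (borel \<Otimes>\<^sub>M borel) ?T) K'"
    using int unfolding eqK by (subst integrable_distr_eq) auto
  then have intD': "integrable (density (lborel \<Otimes>\<^sub>M lborel) (\<lambda>(s, r). ennreal (nfac \<sigma> \<tau> s r))) K'"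
    unfolding gauss_shear[OF pos] .
  have nfm[measurable]: "(\<lambda>w. nfac \<sigma> \<tau> (fst w) (snd w)) \<in> borel_measurable (lborel \<Otimes>\<^sub>M lborel)"
    using nfac_measurable[of \<sigma> \<tau>] by (simp add: case_prod_beta measurable_cong_sets[OF sets_pair_measure_cong[OF sets_lborel sets_lborel] refl])
  have dens_eq: "density (lborel \<Otimes>\<^sub>M lborel) (\<lambda>(s, r). ennreal (nfac \<sigma> \<tau> s r)) =
      density (lborel \<Otimes>\<^sub>M lborel) (\<lambda>w. ennreal (nfac \<sigma> \<tau> (fst w) (snd w)))"
    by (rule arg_cong[where f="density _"]) (simp add: fun_eq_iff)
  have K'l[measurable]: "K' \<in> borel_measurable (lborel \<Otimes>\<^sub>M lborel)"
    using K' by (simp add: measurable_cong_sets[OF sets_pair_measure_cong[OF sets_lborel sets_lborel] refl])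
  have intL: "integrable (lborel \<Otimes>\<^sub>M lborel) (\<lambda>w. nfac \<sigma> \<tau> (fst w) (snd w) * K' w)"
    using intD' unfolding dens_eq by (subst (asm) integrable_density) (auto simp: nfac_nonneg)
  have "integral\<^sup>L ?G (\<lambda>w. (\<tau>\<^sup>2 * fst w - \<sigma>\<^sup>2 * snd w) * h (fst w + snd w)) =
      integral\<^sup>L (distr ?G (borel \<Otimes>\<^sub>M borel) ?T) K'"
    unfolding eqK by (subst integral_distr) auto
  also have "\<dots> = integral\<^sup>L (lborel \<Otimes>\<^sub>M lborel) (\<lambda>w. nfac \<sigma> \<tau> (fst w) (snd w) * K' w)"
    unfolding gauss_shear[OF pos] dens_eq by (subst integral_density) (auto simp: nfac_nonneg)
  also have "\<dots> = (\<integral>s. (\<integral>r. nfac \<sigma> \<tau> s r * K' (s, r) \<partial>lborel) \<partial>lborel)"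
    using lborel_pair.integral_fst'[OF intL] by simp
  also have "\<dots> = (\<integral>s. 0 \<partial>lborel)"
  proof -
  { fix s :: real
    define V where "V = \<sigma>\<^sup>2 + \<tau>\<^sup>2"
    have Vpos: "0 < V" using pos by (simp add: V_def add_pos_pos)
    define m where "m = \<tau>\<^sup>2 * s / V"
    define \<rho> where "\<rho> = sqrt (\<sigma>\<^sup>2 * \<tau>\<^sup>2 / V)"
    have \<rho>pos: "0 < \<rho>" using pos Vpos by (simp add: \<rho>_def)
    define c where "c = normal_density 0 (sqrt V) s * h s"
    have eq: "\<And>r. nfac \<sigma> \<tau> s r * K' (s, r) = c * ((\<tau>\<^sup>2 * s) * normal_density m \<rho> r - V * (normal_density m \<rho> r * r))"
      by (simp add: nfac_def K'_def c_def m_def \<rho>_def V_def algebra_simps)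
    have i1: "integrable lborel (\<lambda>r. normal_density m \<rho> r)" using \<rho>pos by simp
    have i2: "integrable lborel (\<lambda>r. normal_density m \<rho> r * r)" using \<rho>pos by (rule integrable_normal_moment_nz_1)
    have "(\<integral>r. nfac \<sigma> \<tau> s r * K' (s, r) \<partial>lborel) =
        c * ((\<tau>\<^sup>2 * s) * (\<integral>r. normal_density m \<rho> r \<partial>lborel) - V * (\<integral>r. normal_density m \<rho> r * r \<partial>lborel))"
      unfolding eq using i1 i2 by simp
    also have "\<dots> = c * ((\<tau>\<^sup>2 * s) - V * m)"
      using \<rho>pos by (simp add: integral_normal_moment_nz_1)
    also have "\<dots> = 0" using Vpos by (simp add: m_def)
    finally have "(\<integral>r. nfac \<sigma> \<tau> s r * K' (s, r) \<partial>lborel) = 0" . }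
    then show ?thesis by simp
  qed
  also have "(\<integral>s. (0::real) \<partial>lborel) = 0" by simp
  finally show "integral\<^sup>L ?G (\<lambda>w. (\<tau>\<^sup>2 * fst w - \<sigma>\<^sup>2 * snd w) * h (fst w + snd w)) = 0" .
qed



lemma contrast_pair:
  assumes A: "prob_space A" and B: "prob_space B"
    and f[measurable]: "f \<in> borel_measurable A" and g[measurable]: "g \<in> borel_measurable B"
    and fd: "distr A borel f = gauss 0 a" and gd: "distr B borel g = gauss 0 b"
    and pos: "0 < a" "0 < b"
    and h[measurable]: "h \<in> borel_measurable borel" and hb: "\<And>s. \<bar>h s\<bar> \<le> 1"
  shows "integrable (A \<Otimes>\<^sub>M B) (\<lambda>w. (b\<^sup>2 * f (fst w) - a\<^sup>2 * g (snd w)) * h (f (fst w) + g (snd w)))"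
    and "integral\<^sup>L (A \<Otimes>\<^sub>M B) (\<lambda>w. (b\<^sup>2 * f (fst w) - a\<^sup>2 * g (snd w)) * h (f (fst w) + g (snd w))) = 0"
proof -
  have sf: "sigma_finite_measure (distr B borel g)"
    unfolding gd using prob_space_gauss[OF pos(2)] by (rule prob_space_imp_sigma_finite)
  have eq: "gauss 0 a \<Otimes>\<^sub>M gauss 0 b = distr (A \<Otimes>\<^sub>M B) (borel \<Otimes>\<^sub>M borel) (\<lambda>(x, y). (f x, g y))"
    using pair_measure_distr[OF f g sf] unfolding fd gd .
  define K where "K = (\<lambda>w::real\<times>real. (b\<^sup>2 * fst w - a\<^sup>2 * snd w) * h (fst w + snd w))"
  have K[measurable]: "K \<in> borel_measurable (borel \<Otimes>\<^sub>M borel)" unfolding K_def by measurable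
  have fg[measurable]: "(\<lambda>(x, y). (f x, g y)) \<in> measurable (A \<Otimes>\<^sub>M B) (borel \<Otimes>\<^sub>M borel)" by measurable
  have eqK: "(\<lambda>w. (b\<^sup>2 * f (fst w) - a\<^sup>2 * g (snd w)) * h (f (fst w) + g (snd w))) = (\<lambda>w. K ((\<lambda>(x, y). (f x, g y)) w))"
    by (auto simp: K_def fun_eq_iff case_prod_beta)
  have i: "integrable (gauss 0 a \<Otimes>\<^sub>M gauss 0 b) K"
    using core_gauss(1)[OF pos(1) pos(2) h hb] unfolding K_def by (simp add: case_prod_beta)
  show "integrable (A \<Otimes>\<^sub>M B) (\<lambda>w. (b\<^sup>2 * f (fst w) - a\<^sup>2 * g (snd w)) * h (f (fst w) + g (snd w)))"
    using i unfolding eq eqK by (subst (asm) integrable_distr_eq) auto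
  have "integral\<^sup>L (A \<Otimes>\<^sub>M B) (\<lambda>w. (b\<^sup>2 * f (fst w) - a\<^sup>2 * g (snd w)) * h (f (fst w) + g (snd w)))
      = integral\<^sup>L (gauss 0 a \<Otimes>\<^sub>M gauss 0 b) K"
    unfolding eq eqK by (subst integral_distr) auto
  also have "\<dots> = 0"
    using core_gauss(2)[OF pos(1) pos(2) h hb] unfolding K_def by (simp add: case_prod_beta)
  finally show "integral\<^sup>L (A \<Otimes>\<^sub>M B) (\<lambda>w. (b\<^sup>2 * f (fst w) - a\<^sup>2 * g (snd w)) * h (f (fst w) + g (snd w))) = 0" .
qed

lemma sum_gauss_pair:
  assumes pos: "0 < s1" "0 < s2"
  shows "distr (gauss \<mu>1 s1 \<Otimes>\<^sub>M gauss \<mu>2 s2) borel (\<lambda>w. fst w + snd w) = gauss (\<mu>1 + \<mu>2) (sqrt (s1\<^sup>2 + s2\<^sup>2))"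
proof -
  let ?G = "gauss \<mu>1 s1 \<Otimes>\<^sub>M gauss \<mu>2 s2"
  interpret P1: prob_space "gauss \<mu>1 s1" using prob_space_gauss[OF pos(1)] .
  interpret P2: prob_space "gauss \<mu>2 s2" using prob_space_gauss[OF pos(2)] .
  interpret P: pair_prob_space "gauss \<mu>1 s1" "gauss \<mu>2 s2" ..
  have "distr ?G borel fst = distr ?G (gauss \<mu>1 s1) fst"
    by (rule distr_cong) auto
  then have d1: "distr ?G borel fst = gauss \<mu>1 s1"
    using P2.distr_pair_fst[of "gauss \<mu>1 s1"] by simp
  have "distr ?G borel snd = distr ?G (gauss \<mu>2 s2) snd"
    by (rule distr_cong) auto
  then have d2: "distr ?G borel snd = gauss \<mu>2 s2"
    using distr_pair_snd'[of "gauss \<mu>1 s1" "gauss \<mu>2 s2"] P1.prob_space_axioms P2.sigma_finite_measure_axioms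
    by simp
  have d12: "distr ?G (borel \<Otimes>\<^sub>M borel) (\<lambda>x. (fst x, snd x)) = ?G"
    using distr_id2[of "borel \<Otimes>\<^sub>M borel" ?G] sets_pair_measure_cong[OF sets_gauss sets_gauss, of \<mu>1 s1 \<mu>2 s2] by simp
  have ind: "P.indep_var borel fst borel snd"
    unfolding P.indep_var_distribution_eq using d1 d2 d12 by simp
  have D1: "distributed ?G lborel fst (normal_density \<mu>1 s1)"
    unfolding distributed_def
  proof (intro conjI)
    show "distr ?G lborel fst = density lborel (\<lambda>x. ennreal (normal_density \<mu>1 s1 x))"
      using d1 distr_cong[OF refl sets_lborel, of ?G fst fst] unfolding gauss_def by simp
  qed auto
  have D2: "distributed ?G lborel snd (normal_density \<mu>2 s2)"
    unfolding distributed_def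
  proof (intro conjI)
    show "distr ?G lborel snd = density lborel (\<lambda>x. ennreal (normal_density \<mu>2 s2 x))"
      using d2 distr_cong[OF refl sets_lborel, of ?G snd snd] unfolding gauss_def by simp
  qed auto
  have "distributed ?G lborel (\<lambda>x. fst x + snd x) (normal_density (\<mu>1 + \<mu>2) (sqrt (s1\<^sup>2 + s2\<^sup>2)))"
    by (rule P.add_indep_normal[OF ind pos D1 D2])
  then have "distr ?G lborel (\<lambda>x. fst x + snd x) = gauss (\<mu>1 + \<mu>2) (sqrt (s1\<^sup>2 + s2\<^sup>2))"
    unfolding distributed_def gauss_def by simp
  then show ?thesis using distr_cong[OF refl sets_lborel, of ?G "\<lambda>x. fst x + snd x" "\<lambda>x. fst x + snd x"] by simp
qed



lemma prob_space_M3: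
  assumes "0 < a" "0 < b" "0 < c"
  shows "prob_space (gauss m1 a \<Otimes>\<^sub>M (gauss m2 b \<Otimes>\<^sub>M gauss m3 c))"
proof -
  interpret A: prob_space "gauss m1 a" using prob_space_gauss assms by auto
  interpret B: prob_space "gauss m2 b" using prob_space_gauss assms by auto
  interpret C: prob_space "gauss m3 c" using prob_space_gauss assms by auto
  interpret BC: pair_prob_space "gauss m2 b" "gauss m3 c" ..
  interpret ABC: pair_prob_space "gauss m1 a" "gauss m2 b \<Otimes>\<^sub>M gauss m3 c" ..
  show ?thesis by unfold_locales
qed

lemma integrable_M3_bound:
  assumes pos: "0 < a" "0 < b" "0 < c"
    and F[measurable]: "F \<in> borel_measurable (gauss m1 a \<Otimes>\<^sub>M (gauss m2 b \<Otimes>\<^sub>M gauss m3 c))"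
    and bnd: "\<And>\<omega>. \<bar>F \<omega>\<bar> \<le> C * (1 + \<bar>fst \<omega>\<bar> + \<bar>fst (snd \<omega>)\<bar> + \<bar>snd (snd \<omega>)\<bar>)"
  shows "integrable (gauss m1 a \<Otimes>\<^sub>M (gauss m2 b \<Otimes>\<^sub>M gauss m3 c)) F"
proof -
  let ?N = "gauss m2 b \<Otimes>\<^sub>M gauss m3 c"
  let ?M = "gauss m1 a \<Otimes>\<^sub>M ?N"
  interpret A: prob_space "gauss m1 a" using prob_space_gauss assms by auto
  interpret B: prob_space "gauss m2 b" using prob_space_gauss assms by auto
  interpret C: prob_space "gauss m3 c" using prob_space_gauss assms by auto
  interpret BC: pair_prob_space "gauss m2 b" "gauss m3 c" ..
  interpret ABC: pair_prob_space "gauss m1 a" ?N ..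
  have i1: "integrable ?M (\<lambda>\<omega>. \<bar>fst \<omega>\<bar>)"
    by (rule integrable_pair_fst[where f="\<lambda>x. \<bar>x\<bar>"])
       (use pos BC.prob_space_axioms A.sigma_finite_measure_axioms integrable_gauss_id in auto)
  have iN2: "integrable ?N (\<lambda>\<omega>. \<bar>fst \<omega>\<bar>)"
    by (rule integrable_pair_fst[where f="\<lambda>x. \<bar>x\<bar>"])
       (use pos C.prob_space_axioms B.sigma_finite_measure_axioms integrable_gauss_id in auto)
  have iN3: "integrable ?N (\<lambda>\<omega>. \<bar>snd \<omega>\<bar>)"
    by (rule integrable_pair_snd[where f="\<lambda>x. \<bar>x\<bar>"])
       (use pos B.prob_space_axioms C.sigma_finite_measure_axioms integrable_gauss_id in auto)
  have i2: "integrable ?M (\<lambda>\<omega>. \<bar>fst (snd \<omega>)\<bar>)"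
    by (rule integrable_pair_snd[where f="\<lambda>w. \<bar>fst w\<bar>"])
       (use A.prob_space_axioms BC.sigma_finite_measure_axioms iN2 in auto)
  have i3: "integrable ?M (\<lambda>\<omega>. \<bar>snd (snd \<omega>)\<bar>)"
    by (rule integrable_pair_snd[where f="\<lambda>w. \<bar>snd w\<bar>"])
       (use A.prob_space_axioms BC.sigma_finite_measure_axioms iN3 in auto)
  have i0: "integrable ?M (\<lambda>\<omega>. 1::real)" using ABC.integrable_const by simp
  have iall: "integrable ?M (\<lambda>\<omega>. C * (1 + \<bar>fst \<omega>\<bar> + \<bar>fst (snd \<omega>)\<bar> + \<bar>snd (snd \<omega>)\<bar>))"
    using i0 i1 i2 i3 by auto
  show ?thesis
  proof (rule Bochner_Integration.integrable_bound[OF iall F])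
    show "AE x in ?M. norm (F x) \<le> norm (C * (1 + \<bar>fst x\<bar> + \<bar>fst (snd x)\<bar> + \<bar>snd (snd x)\<bar>))"
      using bnd by (auto intro!: AE_I2 order_trans[OF _ abs_ge_self])
  qed
qed



lemma cond_key:
  fixes t m0 m1 \<sigma>0 \<sigma>1 :: real and B :: "real set"
  assumes t: "0 < t" "t < 1" and pos: "0 < \<sigma>0" "0 < \<sigma>1" and B[measurable]: "B \<in> sets borel"
  shows "integral\<^sup>L (gauss m0 \<sigma>0 \<Otimes>\<^sub>M (gauss m1 \<sigma>1 \<Otimes>\<^sub>M gauss 0 (sqrt (\<sigma>0 * \<sigma>1))))
      (\<lambda>\<omega>. indicator B ((1 - t) * fst \<omega> + t * fst (snd \<omega>) + sqrt (2 * t * (1 - t)) * snd (snd \<omega>)) *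
         ((fst (snd \<omega>) - fst \<omega>) + snd (snd \<omega>) * ((1 - 2 * t) / sqrt (2 * t * (1 - t))))) =
    integral\<^sup>L (gauss m0 \<sigma>0 \<Otimes>\<^sub>M (gauss m1 \<sigma>1 \<Otimes>\<^sub>M gauss 0 (sqrt (\<sigma>0 * \<sigma>1))))
      (\<lambda>\<omega>. indicator B ((1 - t) * fst \<omega> + t * fst (snd \<omega>) + sqrt (2 * t * (1 - t)) * snd (snd \<omega>)) *
         ((m1 - m0) + (\<sigma>1 - \<sigma>0) / ((1 - t) * \<sigma>0 + t * \<sigma>1) *
            (((1 - t) * fst \<omega> + t * fst (snd \<omega>) + sqrt (2 * t * (1 - t)) * snd (snd \<omega>)) - ((1 - t) * m0 + t * m1))))"
    (is "integral\<^sup>L ?M ?L = integral\<^sup>L ?M ?R")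
proof -
  define c where "c = sqrt (2 * t * (1 - t))"
  define s where "s = sqrt (\<sigma>0 * \<sigma>1)"
  have cpos: "0 < c" using t by (simp add: c_def)
  have spos: "0 < s" using pos by (simp add: s_def)
  have csq: "c\<^sup>2 = 2 * t * (1 - t)" using t by (simp add: c_def)
  have ssq: "s\<^sup>2 = \<sigma>0 * \<sigma>1" using pos by (simp add: s_def)
  let ?P0 = "gauss m0 \<sigma>0" and ?P1 = "gauss m1 \<sigma>1" and ?Q = "gauss 0 s"
  let ?N = "?P1 \<Otimes>\<^sub>M ?Q"
  interpret A: prob_space ?P0 using prob_space_gauss pos by auto
  interpret B: prob_space ?P1 using prob_space_gauss pos by auto
  interpret C: prob_space ?Q using prob_space_gauss spos by auto
  interpret BC: pair_prob_space ?P1 ?Q ..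
  interpret ABC: pair_prob_space ?P0 ?N ..
  have Meq: "?M = ?P0 \<Otimes>\<^sub>M ?N" by (simp add: s_def)
  define \<mu> where "\<mu> = (1 - t) * m0 + t * m1"
  define g1 where "g1 = (\<lambda>x::real. - (1 - t) * m0 + (1 - t) * x)"
  define g2 where "g2 = (\<lambda>y::real. - t * m1 + t * y)"
  define g3 where "g3 = (\<lambda>z::real. c * z)"
  have [measurable]: "g1 \<in> borel_measurable borel" "g2 \<in> borel_measurable borel" "g3 \<in> borel_measurable borel"
    unfolding g1_def g2_def g3_def by measurable
  define h where "h = (\<lambda>u. indicator B (\<mu> + u) :: real)"
  have h[measurable]: "h \<in> borel_measurable borel" unfolding h_def by measurable
  have hb: "\<And>u. \<bar>h u\<bar> \<le> 1" by (simp add: h_def indicator_def)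
  define H where "H = (\<lambda>\<omega>::real\<times>real\<times>real. h (g1 (fst \<omega>) + g2 (fst (snd \<omega>)) + g3 (snd (snd \<omega>))))"
  have H[measurable]: "H \<in> borel_measurable ?M" unfolding H_def by measurable
  have Xeq: "\<And>\<omega>. (1 - t) * fst \<omega> + t * fst (snd \<omega>) + sqrt (2 * t * (1 - t)) * snd (snd \<omega>) =
      \<mu> + (g1 (fst \<omega>) + g2 (fst (snd \<omega>)) + g3 (snd (snd \<omega>)))"
    by (simp add: g1_def g2_def g3_def \<mu>_def c_def algebra_simps)
  have indH: "\<And>\<omega>. indicator B ((1 - t) * fst \<omega> + t * fst (snd \<omega>) + sqrt (2 * t * (1 - t)) * snd (snd \<omega>)) = H \<omega>"
    unfolding Xeq by (simp add: H_def h_def)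
  have bndlemma: "\<And>F C. F \<in> borel_measurable ?M \<Longrightarrow>
      (\<And>\<omega>. \<bar>F \<omega>\<bar> \<le> C * (1 + \<bar>fst \<omega>\<bar> + \<bar>fst (snd \<omega>)\<bar> + \<bar>snd (snd \<omega>)\<bar>)) \<Longrightarrow> integrable ?M F"
    by (rule integrable_M3_bound) (use pos spos in \<open>auto simp: s_def\<close>)
  have iH: "integrable ?M H"
  proof (rule bndlemma[of _ 1])
    fix \<omega> :: "real \<times> real \<times> real"
    have "\<bar>H \<omega>\<bar> \<le> 1" by (simp add: H_def hb)
    then show "\<bar>H \<omega>\<bar> \<le> 1 * (1 + \<bar>fst \<omega>\<bar> + \<bar>fst (snd \<omega>)\<bar> + \<bar>snd (snd \<omega>)\<bar>)" by simp
  qed simp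
  have ig: "\<And>F. F \<in> borel_measurable ?M \<Longrightarrow> (\<And>\<omega>. \<bar>F \<omega>\<bar> \<le> \<bar>\<alpha>\<bar> * \<bar>fst \<omega>\<bar> + \<bar>\<beta>\<bar> * \<bar>fst (snd \<omega>)\<bar> + \<bar>\<gamma>\<bar> * \<bar>snd (snd \<omega>)\<bar> + \<bar>\<delta>\<bar>)
      \<Longrightarrow> integrable ?M F" for \<alpha> \<beta> \<gamma> \<delta>
  proof (rule bndlemma[of _ "\<bar>\<alpha>\<bar> + \<bar>\<beta>\<bar> + \<bar>\<gamma>\<bar> + \<bar>\<delta>\<bar>"])
    fix F and \<omega> :: "real \<times> real \<times> real"
    assume "\<And>\<omega>. \<bar>F \<omega>\<bar> \<le> \<bar>\<alpha>\<bar> * \<bar>fst \<omega>\<bar> + \<bar>\<beta>\<bar> * \<bar>fst (snd \<omega>)\<bar> + \<bar>\<gamma>\<bar> * \<bar>snd (snd \<omega>)\<bar> + \<bar>\<delta>\<bar>"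
    then have "\<bar>F \<omega>\<bar> \<le> \<bar>\<alpha>\<bar> * \<bar>fst \<omega>\<bar> + \<bar>\<beta>\<bar> * \<bar>fst (snd \<omega>)\<bar> + \<bar>\<gamma>\<bar> * \<bar>snd (snd \<omega>)\<bar> + \<bar>\<delta>\<bar>" .
    also have "\<dots> \<le> (\<bar>\<alpha>\<bar> + \<bar>\<beta>\<bar> + \<bar>\<gamma>\<bar> + \<bar>\<delta>\<bar>) * (1 + \<bar>fst \<omega>\<bar> + \<bar>fst (snd \<omega>)\<bar> + \<bar>snd (snd \<omega>)\<bar>)"
      by (simp add: algebra_simps add_mono mult_left_mono mult_right_mono add_increasing)
    finally show "\<bar>F \<omega>\<bar> \<le> (\<bar>\<alpha>\<bar> + \<bar>\<beta>\<bar> + \<bar>\<gamma>\<bar> + \<bar>\<delta>\<bar>) * (1 + \<bar>fst \<omega>\<bar> + \<bar>fst (snd \<omega>)\<bar> + \<bar>snd (snd \<omega>)\<bar>)" .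
  qed
  have absH: "\<And>\<omega> a. \<bar>a * H \<omega>\<bar> \<le> \<bar>a\<bar>" by (simp add: H_def abs_mult hb mult_left_le)
  have i1: "integrable ?M (\<lambda>\<omega>. g1 (fst \<omega>) * H \<omega>)"
  proof (rule ig[of _ "1 - t" 0 0 "(1 - t) * m0"])
    fix \<omega> :: "real \<times> real \<times> real"
    have "\<bar>g1 (fst \<omega>) * H \<omega>\<bar> \<le> \<bar>g1 (fst \<omega>)\<bar>" by (rule absH)
    also have "\<dots> \<le> \<bar>1 - t\<bar> * \<bar>fst \<omega>\<bar> + \<bar>0\<bar> * \<bar>fst (snd \<omega>)\<bar> + \<bar>0\<bar> * \<bar>snd (snd \<omega>)\<bar> + \<bar>(1 - t) * m0\<bar>"
      using abs_triangle_ineq[of "-(1 - t) * m0" "(1 - t) * fst \<omega>"] by (simp add: g1_def abs_mult abs_minus_commute)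
    finally show "\<bar>g1 (fst \<omega>) * H \<omega>\<bar> \<le> \<bar>1 - t\<bar> * \<bar>fst \<omega>\<bar> + \<bar>0\<bar> * \<bar>fst (snd \<omega>)\<bar> + \<bar>0\<bar> * \<bar>snd (snd \<omega>)\<bar> + \<bar>(1 - t) * m0\<bar>" .
  qed simp
  have i2: "integrable ?M (\<lambda>\<omega>. g2 (fst (snd \<omega>)) * H \<omega>)"
  proof (rule ig[of _ 0 t 0 "t * m1"])
    fix \<omega> :: "real \<times> real \<times> real"
    have "\<bar>g2 (fst (snd \<omega>)) * H \<omega>\<bar> \<le> \<bar>g2 (fst (snd \<omega>))\<bar>" by (rule absH)
    also have "\<dots> \<le> \<bar>0\<bar> * \<bar>fst \<omega>\<bar> + \<bar>t\<bar> * \<bar>fst (snd \<omega>)\<bar> + \<bar>0\<bar> * \<bar>snd (snd \<omega>)\<bar> + \<bar>t * m1\<bar>"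
      using abs_triangle_ineq[of "-t * m1" "t * fst (snd \<omega>)"] by (simp add: g2_def abs_mult)
    finally show "\<bar>g2 (fst (snd \<omega>)) * H \<omega>\<bar> \<le> \<bar>0\<bar> * \<bar>fst \<omega>\<bar> + \<bar>t\<bar> * \<bar>fst (snd \<omega>)\<bar> + \<bar>0\<bar> * \<bar>snd (snd \<omega>)\<bar> + \<bar>t * m1\<bar>" .
  qed simp
  have i3: "integrable ?M (\<lambda>\<omega>. g3 (snd (snd \<omega>)) * H \<omega>)"
  proof (rule ig[of _ 0 0 c 0])
    fix \<omega> :: "real \<times> real \<times> real"
    have "\<bar>g3 (snd (snd \<omega>)) * H \<omega>\<bar> \<le> \<bar>g3 (snd (snd \<omega>))\<bar>" by (rule absH)
    also have "\<dots> \<le> \<bar>0\<bar> * \<bar>fst \<omega>\<bar> + \<bar>0\<bar> * \<bar>fst (snd \<omega>)\<bar> + \<bar>c\<bar> * \<bar>snd (snd \<omega>)\<bar> + \<bar>0\<bar>"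
      by (simp add: g3_def abs_mult)
    finally show "\<bar>g3 (snd (snd \<omega>)) * H \<omega>\<bar> \<le> \<bar>0\<bar> * \<bar>fst \<omega>\<bar> + \<bar>0\<bar> * \<bar>fst (snd \<omega>)\<bar> + \<bar>c\<bar> * \<bar>snd (snd \<omega>)\<bar> + \<bar>0\<bar>" .
  qed simp
  define E1 where "E1 = integral\<^sup>L ?M (\<lambda>\<omega>. g1 (fst \<omega>) * H \<omega>)"
  define E2 where "E2 = integral\<^sup>L ?M (\<lambda>\<omega>. g2 (fst (snd \<omega>)) * H \<omega>)"
  define E3 where "E3 = integral\<^sup>L ?M (\<lambda>\<omega>. g3 (snd (snd \<omega>)) * H \<omega>)"
  define E0 where "E0 = integral\<^sup>L ?M H"
  define v1 where "v1 = ((1 - t) * \<sigma>0)\<^sup>2"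
  define v2 where "v2 = (t * \<sigma>1)\<^sup>2"
  define v3 where "v3 = (c * s)\<^sup>2"
  have v2pos: "0 < v2" using t pos by (simp add: v2_def)
  have v3pos: "0 < v3" using cpos spos by (simp add: v3_def)
  have d1: "distr ?P0 borel g1 = gauss 0 ((1 - t) * \<sigma>0)"
    using gauss_affine[of \<sigma>0 "1 - t" m0 "- (1 - t) * m0"] pos t unfolding g1_def by (simp add: algebra_simps)
  have d2: "distr ?P1 borel g2 = gauss 0 (t * \<sigma>1)"
    using gauss_affine[of \<sigma>1 t m1 "- t * m1"] pos t unfolding g2_def by simp
  have d3: "distr ?Q borel g3 = gauss 0 (c * s)"
    using gauss_affine[of s c 0 0] spos cpos unfolding g3_def by simp
  have I: "v3 * E2 - v2 * E3 = 0"
  proof -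
    define F where "F = (\<lambda>\<omega>::real\<times>real\<times>real. (v3 * g2 (fst (snd \<omega>)) - v2 * g3 (snd (snd \<omega>))) * H \<omega>)"
    have Fi: "integrable (?P0 \<Otimes>\<^sub>M ?N) F"
    proof -
      have "integrable ?M (\<lambda>\<omega>. v3 * (g2 (fst (snd \<omega>)) * H \<omega>) - v2 * (g3 (snd (snd \<omega>)) * H \<omega>))"
        using i2 i3 by auto
      then show ?thesis unfolding Meq F_def by (simp add: algebra_simps)
    qed
    have inner: "(\<integral>w. F (x, w) \<partial>?N) = 0" for x
    proof -
      define h' where "h' = (\<lambda>u. h (g1 x + u))"
      have h'm[measurable]: "h' \<in> borel_measurable borel" unfolding h'_def by measurable
      have "\<And>u. \<bar>h' u\<bar> \<le> 1" by (simp add: h'_def hb)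
      from contrast_pair(2)[OF B.prob_space_axioms C.prob_space_axioms _ _ d2 d3 _ _ h'm this]
      have "integral\<^sup>L ?N (\<lambda>w. ((c * s)\<^sup>2 * g2 (fst w) - (t * \<sigma>1)\<^sup>2 * g3 (snd w)) * h' (g2 (fst w) + g3 (snd w))) = 0"
        using t pos cpos spos by simp
      moreover have "(\<lambda>w. F (x, w)) = (\<lambda>w. ((c * s)\<^sup>2 * g2 (fst w) - (t * \<sigma>1)\<^sup>2 * g3 (snd w)) * h' (g2 (fst w) + g3 (snd w)))"
        by (simp add: F_def H_def h'_def v2_def v3_def add.assoc fun_eq_iff)
      ultimately show ?thesis by simp
    qed
    have "integral\<^sup>L ?M F = 0"
      unfolding Meq using ABC.integral_fst'[OF Fi, symmetric] inner by simp
    moreover have "integral\<^sup>L ?M F = v3 * E2 - v2 * E3"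
    proof -
      have "F = (\<lambda>\<omega>. v3 * (g2 (fst (snd \<omega>)) * H \<omega>) - v2 * (g3 (snd (snd \<omega>)) * H \<omega>))"
        by (simp add: F_def fun_eq_iff algebra_simps)
      then show ?thesis using i2 i3 by (simp add: E2_def E3_def)
    qed
    ultimately show ?thesis by simp
  qed
  define b where "b = sqrt ((t * \<sigma>1)\<^sup>2 + (c * s)\<^sup>2)"
  have bsq: "b\<^sup>2 = v2 + v3" by (simp add: b_def v2_def v3_def)
  have bpos: "0 < b" using v2pos v3pos bsq unfolding b_def by simp
  have II: "(v2 + v3) * E1 - v1 * (E2 + E3) = 0"
  proof -
    define g23 where "g23 = (\<lambda>w::real\<times>real. g2 (fst w) + g3 (snd w))"
    have [measurable]: "g23 \<in> borel_measurable ?N" unfolding g23_def by measurable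
    have dN: "distr ?N borel g23 = gauss 0 b"
    proof -
      have sf: "sigma_finite_measure (distr ?Q borel g3)"
        unfolding d3 using prob_space_gauss[of "c * s" 0] cpos spos by (auto intro: prob_space_imp_sigma_finite)
      have pd: "gauss 0 (t * \<sigma>1) \<Otimes>\<^sub>M gauss 0 (c * s) = distr ?N (borel \<Otimes>\<^sub>M borel) (\<lambda>(x, y). (g2 x, g3 y))"
        using pair_measure_distr[of g2 ?P1 borel g3 ?Q borel] sf d2 d3 by simp
      have "distr ?N borel g23 = distr (distr ?N (borel \<Otimes>\<^sub>M borel) (\<lambda>(x, y). (g2 x, g3 y))) borel (\<lambda>w. fst w + snd w)"
        by (subst distr_distr) (auto simp: g23_def comp_def case_prod_beta)
      also have "\<dots> = gauss 0 b"
        unfolding pd[symmetric] b_def using sum_gauss_pair[of "t * \<sigma>1" "c * s" 0 0] t pos cpos spos by simp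
      finally show ?thesis .
    qed
    have "integral\<^sup>L (?P0 \<Otimes>\<^sub>M ?N) (\<lambda>w. (b\<^sup>2 * g1 (fst w) - ((1 - t) * \<sigma>0)\<^sup>2 * g23 (snd w)) * h (g1 (fst w) + g23 (snd w))) = 0"
      by (rule contrast_pair(2)[OF A.prob_space_axioms BC.prob_space_axioms _ _ d1 dN _ bpos h hb])
         (use t pos in auto)
    moreover have "(\<lambda>w. (b\<^sup>2 * g1 (fst w) - ((1 - t) * \<sigma>0)\<^sup>2 * g23 (snd w)) * h (g1 (fst w) + g23 (snd w))) =
        (\<lambda>\<omega>. (v2 + v3) * (g1 (fst \<omega>) * H \<omega>) - v1 * (g2 (fst (snd \<omega>)) * H \<omega>) - v1 * (g3 (snd (snd \<omega>)) * H \<omega>))"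
      by (simp add: fun_eq_iff g23_def H_def bsq v1_def algebra_simps)
    ultimately have "integral\<^sup>L ?M (\<lambda>\<omega>. (v2 + v3) * (g1 (fst \<omega>) * H \<omega>) - v1 * (g2 (fst (snd \<omega>)) * H \<omega>) - v1 * (g3 (snd (snd \<omega>)) * H \<omega>)) = 0"
      unfolding Meq by simp
    then show ?thesis using i1 i2 i3 by (simp add: E1_def E2_def E3_def algebra_simps)
  qed
  have L: "integral\<^sup>L ?M ?L = (m1 - m0) * E0 + (1 / t) * E2 - (1 / (1 - t)) * E1 + ((1 - 2 * t) / c\<^sup>2) * E3"
  proof -
    have "?L = (\<lambda>\<omega>. (m1 - m0) * H \<omega> + (1 / t) * (g2 (fst (snd \<omega>)) * H \<omega>) - (1 / (1 - t)) * (g1 (fst \<omega>) * H \<omega>)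
        + ((1 - 2 * t) / c\<^sup>2) * (g3 (snd (snd \<omega>)) * H \<omega>))"
    proof
      fix \<omega> :: "real \<times> real \<times> real"
      have "(fst (snd \<omega>) - fst \<omega>) + snd (snd \<omega>) * ((1 - 2 * t) / c) =
         (m1 - m0) + (1 / t) * g2 (fst (snd \<omega>)) - (1 / (1 - t)) * g1 (fst \<omega>) + ((1 - 2 * t) / c\<^sup>2) * g3 (snd (snd \<omega>))"
        using t cpos by (simp add: g1_def g2_def g3_def field_simps power2_eq_square)
      moreover have "?L \<omega> = H \<omega> * ((fst (snd \<omega>) - fst \<omega>) + snd (snd \<omega>) * ((1 - 2 * t) / c))"
        by (simp only: indH c_def)
      ultimately have "?L \<omega> = H \<omega> * ((m1 - m0) + (1 / t) * g2 (fst (snd \<omega>)) - (1 / (1 - t)) * g1 (fst \<omega>) + ((1 - 2 * t) / c\<^sup>2) * g3 (snd (snd \<omega>)))"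
        by simp
      then show "?L \<omega> = (m1 - m0) * H \<omega> + (1 / t) * (g2 (fst (snd \<omega>)) * H \<omega>) - (1 / (1 - t)) * (g1 (fst \<omega>) * H \<omega>)
        + ((1 - 2 * t) / c\<^sup>2) * (g3 (snd (snd \<omega>)) * H \<omega>)"
        by (simp add: algebra_simps)
    qed
    then show ?thesis using iH i1 i2 i3 by (simp add: E0_def E1_def E2_def E3_def)
  qed
  define k where "k = (\<sigma>1 - \<sigma>0) / ((1 - t) * \<sigma>0 + t * \<sigma>1)"
  have R: "integral\<^sup>L ?M ?R = (m1 - m0) * E0 + k * E1 + k * E2 + k * E3"
  proof -
    have "?R = (\<lambda>\<omega>. (m1 - m0) * H \<omega> + k * (g1 (fst \<omega>) * H \<omega>) + k * (g2 (fst (snd \<omega>)) * H \<omega>) + k * (g3 (snd (snd \<omega>)) * H \<omega>))"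
    proof
      fix \<omega> :: "real \<times> real \<times> real"
      show "?R \<omega> = (m1 - m0) * H \<omega> + k * (g1 (fst \<omega>) * H \<omega>) + k * (g2 (fst (snd \<omega>)) * H \<omega>) + k * (g3 (snd (snd \<omega>)) * H \<omega>)"
      proof -
        have "?R \<omega> = H \<omega> * ((m1 - m0) + k * ((\<mu> + (g1 (fst \<omega>) + g2 (fst (snd \<omega>)) + g3 (snd (snd \<omega>)))) - \<mu>))"
          by (simp only: indH, simp only: Xeq k_def \<mu>_def)
        then show ?thesis by (simp add: algebra_simps)
      qed
    qed
    then show ?thesis using iH i1 i2 i3 by (simp add: E0_def E1_def E2_def E3_def)
  qed
  have E3eq: "E3 = v3 / v2 * E2" using I v2pos by (simp add: field_simps)
  have E1eq: "E1 = v1 / v2 * E2"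
  proof -
    have "(v2 + v3) * E1 = v1 * (E2 + E3)" using II by simp
    also have "\<dots> = v1 * (v2 + v3) / v2 * E2" using E3eq v2pos by (simp add: field_simps)
    finally have X: "(v2 + v3) * E1 = v1 * (v2 + v3) / v2 * E2" .
    have "(v2 + v3) * (E1 - v1 / v2 * E2) = 0" using X by (simp add: algebra_simps)
    moreover have "v2 + v3 \<noteq> 0" using v2pos v3pos by simp
    ultimately show ?thesis by simp
  qed
  have st: "0 < (1 - t) * \<sigma>0 + t * \<sigma>1" using t pos by (simp add: add_pos_pos)
  have "(1 / t) * E2 - (1 / (1 - t)) * E1 + ((1 - 2 * t) / c\<^sup>2) * E3 = k * E1 + k * E2 + k * E3"
  proof -
    define S where "S = (1 - t) * \<sigma>0 + t * \<sigma>1"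
    have Spos: "0 < S" using st by (simp add: S_def)
    have v3': "v3 = 2 * t * (1 - t) * (\<sigma>0 * \<sigma>1)" unfolding v3_def power_mult_distrib csq ssq by simp
    have hv: "v1 + v2 + v3 = S\<^sup>2" unfolding v1_def v2_def v3' S_def by (simp add: power2_eq_square algebra_simps)
    have kS: "k * S\<^sup>2 = (\<sigma>1 - \<sigma>0) * S" using Spos by (simp add: k_def S_def[symmetric] power2_eq_square)
    have l1: "(1 / t) * v2 = t * \<sigma>1\<^sup>2" using t by (simp add: v2_def power2_eq_square)
    have l2: "(1 / (1 - t)) * v1 = (1 - t) * \<sigma>0\<^sup>2" using t by (simp add: v1_def power2_eq_square)
    have l3: "((1 - 2 * t) / c\<^sup>2) * v3 = (1 - 2 * t) * (\<sigma>0 * \<sigma>1)"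
      using cpos by (simp add: v3_def power_mult_distrib ssq)
    have key: "(1 / t) * v2 - (1 / (1 - t)) * v1 + ((1 - 2 * t) / c\<^sup>2) * v3 = k * (v1 + v2 + v3)"
      unfolding l1 l2 l3 hv kS by (simp add: S_def power2_eq_square algebra_simps)
    have "(1 / t) * E2 - (1 / (1 - t)) * E1 + ((1 - 2 * t) / c\<^sup>2) * E3 =
        E2 / v2 * ((1 / t) * v2 - (1 / (1 - t)) * v1 + ((1 - 2 * t) / c\<^sup>2) * v3)"
      unfolding E1eq E3eq using v2pos t cpos by (simp add: field_simps)
    also have "\<dots> = E2 / v2 * (k * (v1 + v2 + v3))" unfolding key ..
    also have "\<dots> = k * E1 + k * E2 + k * E3"
      unfolding E1eq E3eq using v2pos by (simp add: field_simps)
    finally show ?thesis .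
  qed
  then show ?thesis unfolding L R by simp
qed



definition Fi :: "real \<Rightarrow> real \<Rightarrow> real \<Rightarrow> real \<Rightarrow> real" where
  "Fi t x y z = (1 - t) * x + t * y + sqrt (2 * t * (1 - t)) * z"

definition vf :: "real \<Rightarrow> real \<Rightarrow> real \<Rightarrow> real \<Rightarrow> real \<Rightarrow> real \<Rightarrow> real" where
  "vf m0 m1 \<sigma>0 \<sigma>1 t x = (m1 - m0) + (\<sigma>1 - \<sigma>0) / ((1 - t) * \<sigma>0 + t * \<sigma>1) * (x - ((1 - t) * m0 + t * m1))"

lemma deriv_Fi:
  assumes "0 < t" "t < 1"
  shows "((\<lambda>s. Fi s x y z) has_real_derivative ((y - x) + z * ((1 - 2 * t) / sqrt (2 * t * (1 - t))))) (at t)"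
proof -
  have pos: "0 < 2 * t * (1 - t)" using assms by simp
  have d: "((\<lambda>s. 2 * s * (1 - s)) has_real_derivative (2 - 4 * t)) (at t)"
    by (auto intro!: derivative_eq_intros simp: algebra_simps)
  have r: "inverse r / 2 * (2 - 4 * t) = (1 - 2 * t) / r" for r :: real
    by (cases "r = 0") (simp_all add: field_simps)
  have e: "inverse (sqrt (2 * t * (1 - t))) / 2 * (2 - 4 * t) = (1 - 2 * t) / sqrt (2 * t * (1 - t))"
    by (rule r)
  have ds: "((\<lambda>s. sqrt (2 * s * (1 - s))) has_real_derivative ((1 - 2 * t) / sqrt (2 * t * (1 - t)))) (at t)"
    using DERIV_chain2[OF DERIV_real_sqrt[OF pos] d] unfolding e by (simp add: comp_def)
  have gen: "((\<lambda>s. (1 - s) * x + s * y + g s * z) has_real_derivative ((y - x) + z * D)) (at t)"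
    if "(g has_real_derivative D) (at t)" for g D
    using that by (auto intro!: derivative_eq_intros simp: algebra_simps)
  show ?thesis unfolding Fi_def
    by (rule gen[OF ds])
qed

lemma velocity_Fi:
  assumes "0 < t" "t < 1"
  shows "velocity (induced_process Fi) t \<omega> = (fst (snd \<omega>) - fst \<omega>) + snd (snd \<omega>) * ((1 - 2 * t) / sqrt (2 * t * (1 - t)))"
  unfolding velocity_def induced_process_def
  by (rule DERIV_imp_deriv[OF deriv_Fi[OF assms]])

lemma cond_velocity_Fi:
  assumes pos: "0 < \<sigma>0" "0 < \<sigma>1"
  shows "is_cond_velocity (induced_space (gauss m0 \<sigma>0) (gauss m1 \<sigma>1) (gauss 0 (sqrt (\<sigma>0 * \<sigma>1))))
           (induced_process Fi) (vf m0 m1 \<sigma>0 \<sigma>1)"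
proof -
  let ?M = "gauss m0 \<sigma>0 \<Otimes>\<^sub>M (gauss m1 \<sigma>1 \<Otimes>\<^sub>M gauss 0 (sqrt (\<sigma>0 * \<sigma>1)))"
  have spos: "0 < sqrt (\<sigma>0 * \<sigma>1)" using pos by simp
  interpret PM: prob_space ?M using prob_space_M3[OF pos spos] .
  have spM[simp]: "space ?M = UNIV" by (simp add: space_pair_measure)
  have main: "(AE \<omega> in ?M. (\<lambda>s. induced_process Fi s \<omega>) differentiable (at t)) \<and>
        integrable ?M (velocity (induced_process Fi) t) \<and>
        (AE \<omega> in ?M. real_cond_exp ?M (vimage_algebra (space ?M) (induced_process Fi t) borel) (velocity (induced_process Fi) t) \<omega>
                      = vf m0 m1 \<sigma>0 \<sigma>1 t (induced_process Fi t \<omega>))"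
    if t: "0 < t" "t < 1" for t
  proof (intro conjI)
    define X where "X = (\<lambda>\<omega>::real\<times>real\<times>real. (1 - t) * fst \<omega> + t * fst (snd \<omega>) + sqrt (2 * t * (1 - t)) * snd (snd \<omega>))"
    define V where "V = (\<lambda>\<omega>::real\<times>real\<times>real. (fst (snd \<omega>) - fst \<omega>) + snd (snd \<omega>) * ((1 - 2 * t) / sqrt (2 * t * (1 - t))))"
    have Xeq: "induced_process Fi t = X" by (simp add: fun_eq_iff induced_process_def Fi_def X_def)
    have Veq: "velocity (induced_process Fi) t = V" by (simp add: fun_eq_iff velocity_Fi[OF t] V_def)
    have Xm[measurable]: "X \<in> borel_measurable ?M" unfolding X_def by measurable
    have Vm[measurable]: "V \<in> borel_measurable ?M" unfolding V_def by measurable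
    show "AE \<omega> in ?M. (\<lambda>s. induced_process Fi s \<omega>) differentiable (at t)"
      using deriv_Fi[OF t] by (auto simp: induced_process_def real_differentiable_def intro!: AE_I2)
    define d where "d = (1 - 2 * t) / sqrt (2 * t * (1 - t))"
    have iV: "integrable ?M V"
    proof (rule integrable_M3_bound[OF pos spos Vm, where C="2 + \<bar>d\<bar>"])
      fix \<omega> :: "real\<times>real\<times>real"
      have "\<bar>V \<omega>\<bar> \<le> \<bar>fst (snd \<omega>)\<bar> + \<bar>fst \<omega>\<bar> + \<bar>snd (snd \<omega>)\<bar> * \<bar>d\<bar>"
        unfolding V_def d_def[symmetric] abs_mult[symmetric] by linarith
      also have "\<dots> \<le> (2 + \<bar>d\<bar>) * (1 + \<bar>fst \<omega>\<bar> + \<bar>fst (snd \<omega>)\<bar> + \<bar>snd (snd \<omega>)\<bar>)"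
        by (simp add: algebra_simps add_mono mult_left_mono mult_right_mono add_increasing)
      finally show "\<bar>V \<omega>\<bar> \<le> (2 + \<bar>d\<bar>) * (1 + \<bar>fst \<omega>\<bar> + \<bar>fst (snd \<omega>)\<bar> + \<bar>snd (snd \<omega>)\<bar>)" .
    qed
    then show "integrable ?M (velocity (induced_process Fi) t)" unfolding Veq .
    define k where "k = (\<sigma>1 - \<sigma>0) / ((1 - t) * \<sigma>0 + t * \<sigma>1)"
    define \<mu> where "\<mu> = (1 - t) * m0 + t * m1"
    have vfeq: "\<And>x. vf m0 m1 \<sigma>0 \<sigma>1 t x = (m1 - m0) + k * (x - \<mu>)" by (simp add: vf_def k_def \<mu>_def)
    have iR: "integrable ?M (\<lambda>\<omega>. vf m0 m1 \<sigma>0 \<sigma>1 t (X \<omega>))"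
    proof (rule integrable_M3_bound[OF pos spos, where C="\<bar>m1 - m0\<bar> + \<bar>k\<bar> * (\<bar>\<mu>\<bar> + \<bar>1 - t\<bar> + \<bar>t\<bar> + \<bar>sqrt (2 * t * (1 - t))\<bar>)"])
      show "(\<lambda>\<omega>. vf m0 m1 \<sigma>0 \<sigma>1 t (X \<omega>)) \<in> borel_measurable ?M" unfolding vfeq by measurable
      fix \<omega> :: "real\<times>real\<times>real"
      let ?a = "\<bar>1 - t\<bar>" and ?b = "\<bar>t\<bar>" and ?c = "\<bar>sqrt (2 * t * (1 - t))\<bar>"
      let ?x = "\<bar>fst \<omega>\<bar>" and ?y = "\<bar>fst (snd \<omega>)\<bar>" and ?z = "\<bar>snd (snd \<omega>)\<bar>"
      have X1: "\<bar>X \<omega> - \<mu>\<bar> \<le> \<bar>\<mu>\<bar> + ?a * ?x + ?b * ?y + ?c * ?z"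
        unfolding X_def abs_mult[symmetric] by linarith
      have "\<bar>vf m0 m1 \<sigma>0 \<sigma>1 t (X \<omega>)\<bar> \<le> \<bar>m1 - m0\<bar> + \<bar>k\<bar> * \<bar>X \<omega> - \<mu>\<bar>"
        unfolding vfeq abs_mult[symmetric] by linarith
      also have "\<dots> \<le> \<bar>m1 - m0\<bar> + \<bar>k\<bar> * (\<bar>\<mu>\<bar> + ?a * ?x + ?b * ?y + ?c * ?z)"
        using X1 by (simp add: mult_left_mono)
      also have "\<dots> \<le> (\<bar>m1 - m0\<bar> + \<bar>k\<bar> * (\<bar>\<mu>\<bar> + ?a + ?b + ?c)) * (1 + ?x + ?y + ?z)"
        by (simp add: algebra_simps add_mono mult_left_mono mult_right_mono add_increasing mult_nonneg_nonneg)
      finally show "\<bar>vf m0 m1 \<sigma>0 \<sigma>1 t (X \<omega>)\<bar> \<le> (\<bar>m1 - m0\<bar> + \<bar>k\<bar> * (\<bar>\<mu>\<bar> + ?a + ?b + ?c)) * (1 + ?x + ?y + ?z)" .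
    qed
    let ?F = "vimage_algebra (space ?M) X borel"
    interpret FS: finite_measure_subalgebra ?M ?F
    proof unfold_locales
      show "subalgebra ?M ?F" unfolding subalgebra_def
        using sets_image_in_sets[of ?M "space ?M" X borel] Xm by simp
    qed
    have "AE \<omega> in ?M. real_cond_exp ?M ?F V \<omega> = vf m0 m1 \<sigma>0 \<sigma>1 t (X \<omega>)"
    proof (rule FS.real_cond_exp_charact)
      fix A assume "A \<in> sets ?F"
      then obtain B where B: "B \<in> sets borel" and A: "A = X -` B"
        by (subst (asm) sets_vimage_algebra2) auto
      have indA: "\<And>\<omega>. indicator A \<omega> = (indicator B (X \<omega>) :: real)" unfolding A by (simp add: indicator_def)
      show "(\<integral>\<omega>\<in>A. V \<omega> \<partial>?M) = (\<integral>\<omega>\<in>A. vf m0 m1 \<sigma>0 \<sigma>1 t (X \<omega>) \<partial>?M)"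
        unfolding set_lebesgue_integral_def indA using cond_key[OF t pos B, of m0 m1]
        by (simp add: X_def V_def vf_def)
    next
      show "integrable ?M V" by (rule iV)
      show "integrable ?M (\<lambda>\<omega>. vf m0 m1 \<sigma>0 \<sigma>1 t (X \<omega>))" by (rule iR)
      have "X \<in> measurable ?F borel" by (rule measurable_vimage_algebra1) simp
      then show "(\<lambda>\<omega>. vf m0 m1 \<sigma>0 \<sigma>1 t (X \<omega>)) \<in> borel_measurable ?F" unfolding vfeq by measurable
    qed
    then show "AE \<omega> in ?M. real_cond_exp ?M (vimage_algebra (space ?M) (induced_process Fi t) borel) (velocity (induced_process Fi) t) \<omega>
                      = vf m0 m1 \<sigma>0 \<sigma>1 t (induced_process Fi t \<omega>)"
      unfolding Xeq Veq .
  qed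
  have "AE t in lborel. t \<noteq> 0" by (rule AE_lborel_singleton)
  moreover have "AE t in lborel. t \<noteq> 1" by (rule AE_lborel_singleton)
  ultimately show ?thesis
    unfolding is_cond_velocity_def induced_space_def
    by eventually_elim (use main in auto)
qed



definition gd :: "real \<Rightarrow> real \<Rightarrow> real \<Rightarrow> real \<Rightarrow> real" where
  "gd x y z s = (y - x) + z * ((1 - 2 * s) / sqrt (2 * s * (1 - s)))"

lemma gd_bound:
  assumes s: "0 < s" "s < 1"
  shows "\<bar>gd x y z s\<bar> \<le> (\<bar>y - x\<bar> + \<bar>z\<bar>) * (s powr (1/2 - 1) * (1 - s) powr (1/2 - 1))"
proof -
  define w where "w = s * (1 - s)"
  have wpos: "0 < w" using s by (simp add: w_def)
  have wle: "w \<le> 1" using mult_mono[of s 1 "1 - s" 1] s unfolding w_def by simp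
  have sqw: "0 < sqrt w" "sqrt w \<le> 1" using wpos wle by auto
  have pw: "s powr (1/2 - 1) * (1 - s) powr (1/2 - 1) = 1 / sqrt w"
  proof -
    have h: "(1/2::real) - 1 = - (1/2)" by simp
    have "s powr (1/2 - 1) * (1 - s) powr (1/2 - 1) = w powr (- (1/2))"
      unfolding w_def powr_mult h ..
    also have "\<dots> = 1 / sqrt w"
      unfolding powr_minus powr_half_sqrt[OF less_imp_le[OF wpos]] by (simp add: inverse_eq_divide)
    finally show ?thesis .
  qed
  have e1: "\<bar>1 - 2 * s\<bar> \<le> 1" using s by simp
  have e2: "sqrt w \<le> sqrt (2 * s * (1 - s))" using wpos unfolding w_def by simp
  have "\<bar>(1 - 2 * s) / sqrt (2 * s * (1 - s))\<bar> = \<bar>1 - 2 * s\<bar> / sqrt (2 * s * (1 - s))"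
    using s by (simp add: abs_divide)
  also have "\<dots> \<le> 1 / sqrt w"
    by (rule frac_le) (use e1 e2 sqw in auto)
  finally have q: "\<bar>(1 - 2 * s) / sqrt (2 * s * (1 - s))\<bar> \<le> 1 / sqrt w" .
  have one: "1 \<le> 1 / sqrt w" using sqw by simp
  have "\<bar>gd x y z s\<bar> \<le> \<bar>y - x\<bar> + \<bar>z\<bar> * \<bar>(1 - 2 * s) / sqrt (2 * s * (1 - s))\<bar>"
    unfolding gd_def abs_mult[symmetric] by (rule abs_triangle_ineq)
  also have "\<dots> \<le> \<bar>y - x\<bar> * (1 / sqrt w) + \<bar>z\<bar> * (1 / sqrt w)"
    using add_mono[OF mult_left_mono[OF one, of "\<bar>y - x\<bar>"] mult_left_mono[OF q, of "\<bar>z\<bar>"]] by simp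
  also have "\<dots> = (\<bar>y - x\<bar> + \<bar>z\<bar>) * (s powr (1/2 - 1) * (1 - s) powr (1/2 - 1))"
    unfolding pw by (simp add: algebra_simps)
  finally show ?thesis .
qed

lemma gd_measurable[measurable]: "gd x y z \<in> borel_measurable borel"
  unfolding gd_def by measurable

lemma AE_lborel_interior01: "AE s in lborel. s \<in> {0..1} \<longrightarrow> s \<in> {0<..<(1::real)}"
proof -
  have "AE s in lborel. s \<noteq> 0 \<and> s \<noteq> (1::real)"
    using AE_lborel_singleton[of 0] AE_lborel_singleton[of 1] by (auto intro: eventually_conj)
  then show ?thesis by (rule eventually_mono) auto
qed

lemma set_integrable_gd_powr:
  assumes "0 < q" "q < 2"
  shows "set_integrable lborel {0..1} (\<lambda>s. \<bar>gd x y z s\<bar> powr q)"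
proof -
  define a where "a = 1 - q / 2"
  have apos: "0 < a" using assms by (simp add: a_def)
  define K where "K = (\<bar>y - x\<bar> + \<bar>z\<bar>) powr q"
  have B: "set_integrable lborel {0..1} (\<lambda>s. s powr (a - 1) * (1 - s) powr (a - 1))"
    by (rule integrable_Beta) (use apos in auto)
  then have B': "set_integrable lborel {0..1} (\<lambda>s. K * (s powr (a - 1) * (1 - s) powr (a - 1)))"
    by (rule set_integrable_mult_right)
  show ?thesis
    unfolding set_integrable_def
  proof (rule Bochner_Integration.integrable_bound[OF B'[unfolded set_integrable_def]])
    show "(\<lambda>s. indicat_real {0..1} s *\<^sub>R \<bar>gd x y z s\<bar> powr q) \<in> borel_measurable lborel"
      by measurable
    show "AE s in lborel. norm (indicat_real {0..1} s *\<^sub>R \<bar>gd x y z s\<bar> powr q)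
        \<le> norm (indicat_real {0..1} s *\<^sub>R (K * (s powr (a - 1) * (1 - s) powr (a - 1))))"
      using AE_lborel_interior01
    proof eventually_elim
      case (elim s)
      show ?case
      proof (cases "s \<in> {0..1}")
        case False then show ?thesis by simp
      next
        case True
        with elim have s: "0 < s" "s < 1" by auto
        have "\<bar>gd x y z s\<bar> powr q \<le> ((\<bar>y - x\<bar> + \<bar>z\<bar>) * (s powr (1/2 - 1) * (1 - s) powr (1/2 - 1))) powr q"
          by (rule powr_mono2) (use assms gd_bound[OF s] in auto)
        also have "\<dots> = K * (s powr (a - 1) * (1 - s) powr (a - 1))"
        proof -
          have e: "(1/2 - 1) * q = a - 1" by (simp add: a_def)
          show ?thesis unfolding powr_mult powr_powr e K_def by (simp add: algebra_simps)
        qed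
        finally have "\<bar>gd x y z s\<bar> powr q \<le> K * (s powr (a - 1) * (1 - s) powr (a - 1))" .
        moreover have "0 \<le> K * (s powr (a - 1) * (1 - s) powr (a - 1))" by (simp add: K_def)
        ultimately show ?thesis using True by simp
      qed
    qed
  qed
qed

lemma set_integrable_gd:
  "set_integrable lborel {0..1} (gd x y z)"
proof -
  have "set_integrable lborel {0..1} (\<lambda>s. \<bar>gd x y z s\<bar> powr 1)"
    by (rule set_integrable_gd_powr) auto
  moreover have "(\<lambda>s. \<bar>gd x y z s\<bar> powr 1) = (\<lambda>s. \<bar>gd x y z s\<bar>)" by (simp add: fun_eq_iff)
  ultimately have "set_integrable lborel {0..1} (\<lambda>s. \<bar>gd x y z s\<bar>)" by simp
  then have "integrable lborel (\<lambda>s. \<bar>indicat_real {0..1} s *\<^sub>R gd x y z s\<bar>)"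
    unfolding set_integrable_def by (simp add: abs_mult)
  then show ?thesis
    unfolding set_integrable_def
    by (rule integrable_abs_cancel) measurable
qed

lemma W1p_Fi:
  assumes "1 \<le> p" "p < 2"
  shows "W1p p (\<lambda>t. Fi t x y z)"
  unfolding W1p_def
proof (intro exI conjI)
  show "gd x y z \<in> borel_measurable lborel" by simp
  show "set_integrable lborel {0..1} (\<lambda>s. \<bar>gd x y z s\<bar> powr p)"
    by (rule set_integrable_gd_powr) (use assms in auto)
  show "set_integrable lborel {0..1} (gd x y z)" by (rule set_integrable_gd)
  show "AE t in lborel. t \<in> {0..1} \<longrightarrow> Fi t x y z = x + (LINT s:{0..t}|lborel. gd x y z s)"
  proof (rule AE_I2, rule impI)
    fix t :: real assume t: "t \<in> {0..1}"
    have si: "set_integrable lborel {0..t} (gd x y z)"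
      by (rule set_integrable_subset[OF set_integrable_gd]) (use t in auto)
    have "(gd x y z has_integral (Fi t x y z - Fi 0 x y z)) {0..t}"
    proof (rule fundamental_theorem_of_calculus_interior)
      show "0 \<le> t" using t by simp
      show "continuous_on {0..t} (\<lambda>s. Fi s x y z)"
        unfolding Fi_def by (intro continuous_intros)
      fix s assume s: "s \<in> {0<..<t}"
      then have "0 < s" "s < 1" using t by auto
      from deriv_Fi[OF this, of x y z]
      show "((\<lambda>s. Fi s x y z) has_vector_derivative gd x y z s) (at s)"
        unfolding has_real_derivative_iff_has_vector_derivative gd_def .
    qed
    then have "integral {0..t} (gd x y z) = Fi t x y z - x"
      by (simp add: integral_unique Fi_def)
    moreover have "(LINT s:{0..t}|lborel. gd x y z s) = integral {0..t} (gd x y z)"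
      by (rule set_borel_integral_eq_integral(2)[OF si])
    ultimately show "Fi t x y z = x + (LINT s:{0..t}|lborel. gd x y z s)" by simp
  qed
qed



definition St :: "real \<Rightarrow> real \<Rightarrow> real \<Rightarrow> real" where
  "St \<sigma>0 \<sigma>1 t = (1 - t) * \<sigma>0 + t * \<sigma>1"

definition mt :: "real \<Rightarrow> real \<Rightarrow> real \<Rightarrow> real" where
  "mt m0 m1 t = (1 - t) * m0 + t * m1"

definition phi0 :: "real \<Rightarrow> real \<Rightarrow> real \<Rightarrow> real \<Rightarrow> real \<Rightarrow> real \<Rightarrow> real" where
  "phi0 m0 m1 \<sigma>0 \<sigma>1 t x = mt m0 m1 t + St \<sigma>0 \<sigma>1 t / \<sigma>0 * (x - m0)"

lemma vf_alt: "vf m0 m1 \<sigma>0 \<sigma>1 t x = (m1 - m0) + (\<sigma>1 - \<sigma>0) / St \<sigma>0 \<sigma>1 t * (x - mt m0 m1 t)"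
  by (simp add: vf_def St_def mt_def)

lemma St_pos: "0 < \<sigma>0 \<Longrightarrow> 0 < \<sigma>1 \<Longrightarrow> t \<in> {0..1} \<Longrightarrow> 0 < St \<sigma>0 \<sigma>1 t"
  unfolding St_def
  by (cases "t = 0") (auto intro!: add_pos_nonneg add_nonneg_pos mult_pos_pos)

lemma vf_phi0:
  assumes "0 < \<sigma>0" "0 < \<sigma>1" "t \<in> {0..1}"
  shows "vf m0 m1 \<sigma>0 \<sigma>1 t (phi0 m0 m1 \<sigma>0 \<sigma>1 t x) = (m1 - m0) + (\<sigma>1 - \<sigma>0) / \<sigma>0 * (x - m0)"
  using St_pos[OF assms] assms unfolding vf_alt phi0_def by (simp add: field_simps)

lemma phi0_deriv:
  "\<sigma>0 \<noteq> 0 \<Longrightarrow> ((\<lambda>s. phi0 m0 m1 \<sigma>0 \<sigma>1 s x) has_real_derivative ((m1 - m0) + (\<sigma>1 - \<sigma>0) / \<sigma>0 * (x - m0))) (at t within S)"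
  unfolding phi0_def mt_def St_def
  by (auto intro!: derivative_eq_intros simp: field_simps)

lemma is_flow_phi0:
  assumes pos: "0 < \<sigma>0" "0 < \<sigma>1"
  shows "is_flow (vf m0 m1 \<sigma>0 \<sigma>1) (phi0 m0 m1 \<sigma>0 \<sigma>1)"
  unfolding is_flow_def
proof (intro allI ballI conjI)
  fix x t :: real assume t: "t \<in> {0..1}"
  define C where "C = (m1 - m0) + (\<sigma>1 - \<sigma>0) / \<sigma>0 * (x - m0)"
  have eq: "\<And>s. s \<in> {0..t} \<Longrightarrow> vf m0 m1 \<sigma>0 \<sigma>1 s (phi0 m0 m1 \<sigma>0 \<sigma>1 s x) = C"
    unfolding C_def by (rule vf_phi0[OF pos]) (use t in auto)
  have ci: "set_integrable lborel {0..t} (\<lambda>s. C)"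
    unfolding set_integrable_def by (rule borel_integrable_compact) auto
  then show "set_integrable lborel {0..t} (\<lambda>s. vf m0 m1 \<sigma>0 \<sigma>1 s (phi0 m0 m1 \<sigma>0 \<sigma>1 s x))"
    using set_integrable_cong[of lborel lborel "{0..t}" "{0..t}" "\<lambda>s. vf m0 m1 \<sigma>0 \<sigma>1 s (phi0 m0 m1 \<sigma>0 \<sigma>1 s x)" "\<lambda>s. C"] eq
    by blast
  have "(LINT s:{0..t}|lborel. vf m0 m1 \<sigma>0 \<sigma>1 s (phi0 m0 m1 \<sigma>0 \<sigma>1 s x)) = (LINT s:{0..t}|lborel. C)"
    by (rule set_lebesgue_integral_cong) (use eq in auto)
  also have "\<dots> = integral {0..t} (\<lambda>s. C)" by (rule set_borel_integral_eq_integral(2)[OF ci])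
  also have "\<dots> = t * C" using t by simp
  finally show "phi0 m0 m1 \<sigma>0 \<sigma>1 t x = x + (LINT s:{0..t}|lborel. vf m0 m1 \<sigma>0 \<sigma>1 s (phi0 m0 m1 \<sigma>0 \<sigma>1 s x))"
    using pos by (simp add: C_def phi0_def mt_def St_def field_simps)
qed

lemma flow_unique:
  assumes pos: "0 < \<sigma>0" "0 < \<sigma>1" and fl: "is_flow (vf m0 m1 \<sigma>0 \<sigma>1) \<phi>"
  shows "\<forall>t\<in>{0..1}. \<phi> t x = phi0 m0 m1 \<sigma>0 \<sigma>1 t x"
proof -
  define u where "u = (\<lambda>s. vf m0 m1 \<sigma>0 \<sigma>1 s (\<phi> s x))"
  have fl': "\<And>t. t \<in> {0..1} \<Longrightarrow> set_integrable lborel {0..t} u \<and> \<phi> t x = x + (LINT s:{0..t}|lborel. u s)"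
    using fl unfolding is_flow_def u_def by blast
  have ui: "u integrable_on {0..1}"
    using fl'[of 1] by (auto intro: set_borel_integral_eq_integral(1))
  have phi_eq: "\<And>s. s \<in> {0..1} \<Longrightarrow> \<phi> s x = x + integral {0..s} u"
    using fl' set_borel_integral_eq_integral(2) by metis
  have ci: "continuous_on {0..1} (\<lambda>s. integral {0..s} u)"
    by (rule indefinite_integral_continuous_1[OF ui])
  have cphi: "continuous_on {0..1} (\<lambda>s. \<phi> s x)"
    by (rule continuous_on_eq[of _ "\<lambda>s. x + integral {0..s} u"]) (use ci phi_eq in \<open>auto intro!: continuous_intros\<close>)
  have Sne: "\<And>s. s \<in> {0..1} \<Longrightarrow> St \<sigma>0 \<sigma>1 s \<noteq> 0" using St_pos[OF pos] by force
  have cu: "continuous_on {0..1} u"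
    unfolding u_def vf_alt St_def mt_def
    by (intro continuous_intros cphi) (use Sne in \<open>auto simp: St_def\<close>)
  have du: "((\<lambda>s. \<phi> s x) has_real_derivative u s) (at s within {0..1})" if s: "s \<in> {0..1}" for s
  proof -
    have "((\<lambda>s. integral {0..s} u) has_vector_derivative u s) (at s within {0..1})"
      by (rule integral_has_vector_derivative[OF cu s])
    then have "((\<lambda>s. x + integral {0..s} u) has_real_derivative u s) (at s within {0..1})"
      unfolding has_real_derivative_iff_has_vector_derivative[symmetric]
      by (auto intro!: derivative_eq_intros)
    then show ?thesis
      by (rule has_field_derivative_transform_within[OF _ zero_less_one s]) (use phi_eq in auto)
  qed
  define w where "w = (\<lambda>s. (\<phi> s x - mt m0 m1 s) / St \<sigma>0 \<sigma>1 s)"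
  have dw: "(w has_real_derivative 0) (at s within {0..1})" if s: "s \<in> {0..1}" for s
  proof -
    have dm: "((\<lambda>s. mt m0 m1 s) has_real_derivative (m1 - m0)) (at s within {0..1})"
      unfolding mt_def by (auto intro!: derivative_eq_intros)
    have dS: "((\<lambda>s. St \<sigma>0 \<sigma>1 s) has_real_derivative (\<sigma>1 - \<sigma>0)) (at s within {0..1})"
      unfolding St_def by (auto intro!: derivative_eq_intros)
    have "(w has_real_derivative (((u s - (m1 - m0)) * St \<sigma>0 \<sigma>1 s - (\<sigma>1 - \<sigma>0) * (\<phi> s x - mt m0 m1 s)) / (St \<sigma>0 \<sigma>1 s) ^ Suc (Suc 0))) (at s within {0..1})"
      unfolding w_def by (rule DERIV_quotient[OF DERIV_diff[OF du[OF s] dm] dS Sne[OF s]])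
    moreover have "((u s - (m1 - m0)) * St \<sigma>0 \<sigma>1 s - (\<sigma>1 - \<sigma>0) * (\<phi> s x - mt m0 m1 s)) = 0"
      unfolding u_def vf_alt using Sne[OF s] by (simp add: field_simps)
    ultimately show ?thesis by simp
  qed
  obtain c where c: "\<And>s. s \<in> {0..1} \<Longrightarrow> w s = c"
    using has_field_derivative_zero_constant[of "{0..1}" w] dw by auto
  have phi00: "\<phi> 0 x = x" using phi_eq[of 0] by simp
  have c0: "c = (x - m0) / \<sigma>0" using c[of 0] phi00 by (simp add: w_def mt_def St_def)
  show ?thesis
  proof
    fix t :: real assume t: "t \<in> {0..1}"
    have "(\<phi> t x - mt m0 m1 t) / St \<sigma>0 \<sigma>1 t = (x - m0) / \<sigma>0" using c[OF t] c0 by (simp add: w_def)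
    then show "\<phi> t x = phi0 m0 m1 \<sigma>0 \<sigma>1 t x"
      using Sne[OF t] pos unfolding phi0_def by (simp add: field_simps)
  qed
qed

lemma flow_second_deriv:
  assumes pos: "0 < \<sigma>0" "0 < \<sigma>1" and fl: "is_flow (vf m0 m1 \<sigma>0 \<sigma>1) \<phi>"
  shows "second_deriv_zero \<phi>"
  unfolding second_deriv_zero_def
proof
  fix x :: real
  define C where "C = (m1 - m0) + (\<sigma>1 - \<sigma>0) / \<sigma>0 * (x - m0)"
  have U: "\<forall>t\<in>{0..1}. \<phi> t x = phi0 m0 m1 \<sigma>0 \<sigma>1 t x" by (rule flow_unique[OF pos fl])
  show "\<exists>d. (\<forall>t\<in>{0..1}. ((\<lambda>s. \<phi> s x) has_real_derivative d t) (at t within {0..1})) \<and>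
            (\<forall>t\<in>{0..1}. (d has_real_derivative 0) (at t within {0..1}))"
  proof (intro exI[of _ "\<lambda>_. C"] conjI ballI)
    fix t :: real assume t: "t \<in> {0..1}"
    show "((\<lambda>s. \<phi> s x) has_real_derivative C) (at t within {0..1})"
      unfolding C_def
      by (rule has_field_derivative_transform_within[OF phi0_deriv zero_less_one t])
         (use U pos in auto)
    show "((\<lambda>_. C) has_real_derivative 0) (at t within {0..1})" by simp
  qed
qed



lemma base_interp_path_Fi:
  assumes "1 \<le> p" "p < 2"
  shows "base_interp_path p Fi"
  unfolding base_interp_path_def
proof (intro conjI)
  have "(\<lambda>(t, x, y, z). Fi t x y z) \<in> borel_measurable (borel :: (real \<times> real \<times> real \<times> real) measure)"
    unfolding borel_prod[symmetric] Fi_def by measurable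
  then show "(\<lambda>(t, x, y, z). Fi t x y z) \<in> borel_measurable (restrict_space borel ({0..1} \<times> UNIV))"
    by (rule measurable_restrict_space1)
  show "AE w in (lborel :: (real \<times> real \<times> real) measure).
        W1p p (\<lambda>t. Fi t (fst w) (fst (snd w)) (snd (snd w))) \<and>
        Fi 0 (fst w) (fst (snd w)) (snd (snd w)) = fst w \<and>
        Fi 1 (fst w) (fst (snd w)) (snd (snd w)) = fst (snd w)"
    by (rule AE_I2) (intro conjI W1p_Fi[OF assms]; simp add: Fi_def)
qed

lemma abs_cont_gauss: "absolutely_continuous lborel (gauss m s)"
  unfolding gauss_def by (rule absolutely_continuousI_density) simp

lemma gen_interpolant_Fi:
  assumes "1 \<le> p" "p < 2" "0 < s"
  shows "gen_interpolant p Fi (gauss 0 s)"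
  unfolding gen_interpolant_def
  using base_interp_path_Fi[OF assms(1,2)] prob_space_gauss[OF assms(3)] abs_cont_gauss by simp

lemma in_S_Fi:
  assumes pos: "0 < \<sigma>0" "0 < \<sigma>1" "0 < s"
  shows "in_S (induced_space (gauss m0 \<sigma>0) (gauss m1 \<sigma>1) (gauss 0 s)) (induced_process Fi) (gauss m0 \<sigma>0) (gauss m1 \<sigma>1)"
  unfolding in_S_def induced_space_def
proof (intro conjI ballI)
  let ?N = "gauss m1 \<sigma>1 \<Otimes>\<^sub>M gauss 0 s"
  let ?M = "gauss m0 \<sigma>0 \<Otimes>\<^sub>M ?N"
  show "prob_space ?M" by (rule prob_space_M3[OF pos])
  fix t :: real
  show "induced_process Fi t \<in> borel_measurable ?M"
    unfolding induced_process_def Fi_def by measurable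
next
  let ?N = "gauss m1 \<sigma>1 \<Otimes>\<^sub>M gauss 0 s"
  let ?M = "gauss m0 \<sigma>0 \<Otimes>\<^sub>M ?N"
  show "AE \<omega> in ?M. continuous_on {0..1} (\<lambda>t. induced_process Fi t \<omega>)"
    unfolding induced_process_def Fi_def by (intro AE_I2 continuous_intros)
  interpret B: prob_space "gauss m1 \<sigma>1" using prob_space_gauss pos by auto
  interpret C: prob_space "gauss 0 s" using prob_space_gauss pos by auto
  interpret BC: pair_prob_space "gauss m1 \<sigma>1" "gauss 0 s" ..
  have d1: "distr (gauss m0 \<sigma>0) borel (\<lambda>x. x) = gauss m0 \<sigma>0" by (rule distr_id2) simp
  have "distr ?N borel fst = distr ?N (gauss m1 \<sigma>1) fst" by (rule distr_cong) auto
  then have d2: "distr ?N borel fst = gauss m1 \<sigma>1" using C.distr_pair_fst[of "gauss m1 \<sigma>1"] by simp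
  have sf: "sigma_finite_measure (distr ?N borel fst)"
    unfolding d2 by (rule B.sigma_finite_measure_axioms)
  have "gauss m0 \<sigma>0 \<Otimes>\<^sub>M gauss m1 \<sigma>1 = distr ?M (borel \<Otimes>\<^sub>M borel) (\<lambda>(x, y). (x, fst y))"
    using pair_measure_distr[of "\<lambda>x. x" "gauss m0 \<sigma>0" borel fst ?N borel] sf d1 d2 by simp
  also have "\<dots> = distr ?M (borel \<Otimes>\<^sub>M borel) (\<lambda>\<omega>. (induced_process Fi 0 \<omega>, induced_process Fi 1 \<omega>))"
    by (rule distr_cong) (auto simp: induced_process_def Fi_def)
  finally show "distr ?M (borel \<Otimes>\<^sub>M borel) (\<lambda>\<omega>. (induced_process Fi 0 \<omega>, induced_process Fi 1 \<omega>)) =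
      gauss m0 \<sigma>0 \<Otimes>\<^sub>M gauss m1 \<sigma>1" by simp
qed

lemma vf_measurable:
  "(\<lambda>(t, x). vf m0 m1 \<sigma>0 \<sigma>1 t x) \<in> borel_measurable (restrict_space borel ({0..1} \<times> UNIV))"
proof -
  have "(\<lambda>(t, x). vf m0 m1 \<sigma>0 \<sigma>1 t x) \<in> borel_measurable (borel :: (real \<times> real) measure)"
    unfolding borel_prod[symmetric] vf_def by measurable
  then show ?thesis by (rule measurable_restrict_space1)
qed

lemma vf_lipschitz:
  assumes pos: "0 < \<sigma>0" "0 < \<sigma>1"
  shows "\<exists>L. \<forall>t\<in>{0..1}. L-lipschitz_on UNIV (vf m0 m1 \<sigma>0 \<sigma>1 t)"
proof (intro exI ballI lipschitz_onI)
  define L where "L = \<bar>\<sigma>1 - \<sigma>0\<bar> / min \<sigma>0 \<sigma>1"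
  fix t x y :: real assume t: "t \<in> {0..1}"
  have mpos: "0 < min \<sigma>0 \<sigma>1" using pos by simp
  have Sge: "min \<sigma>0 \<sigma>1 \<le> St \<sigma>0 \<sigma>1 t"
  proof -
    have "min \<sigma>0 \<sigma>1 = (1 - t) * min \<sigma>0 \<sigma>1 + t * min \<sigma>0 \<sigma>1" by (simp add: algebra_simps)
    also have "\<dots> \<le> (1 - t) * \<sigma>0 + t * \<sigma>1"
      using t by (intro add_mono mult_left_mono) auto
    finally show ?thesis by (simp add: St_def)
  qed
  have "dist (vf m0 m1 \<sigma>0 \<sigma>1 t x) (vf m0 m1 \<sigma>0 \<sigma>1 t y) = \<bar>\<sigma>1 - \<sigma>0\<bar> / St \<sigma>0 \<sigma>1 t * dist x y"
  proof -
    have "vf m0 m1 \<sigma>0 \<sigma>1 t x - vf m0 m1 \<sigma>0 \<sigma>1 t y = (\<sigma>1 - \<sigma>0) / St \<sigma>0 \<sigma>1 t * (x - y)"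
      unfolding vf_alt using St_pos[OF pos t] by (simp add: field_simps)
    then show ?thesis unfolding dist_real_def using St_pos[OF pos t] by (simp add: abs_mult abs_divide)
  qed
  also have "\<dots> \<le> L * dist x y"
    unfolding L_def
    by (intro mult_right_mono divide_left_mono Sge) (use mpos St_pos[OF pos t] in auto)
  finally show "dist (vf m0 m1 \<sigma>0 \<sigma>1 t x) (vf m0 m1 \<sigma>0 \<sigma>1 t y) \<le> L * dist x y" .
  show "0 \<le> L" unfolding L_def using mpos by simp
qed



theorem proposition3p5:
  fixes p m0 m1 \<sigma>0 \<sigma>1 :: real
  assumes "1 \<le> p" and "p < 2"
    and "\<sigma>0 > 0" and "\<sigma>1 > 0"
  shows "in_F_SL p
           (\<lambda>t x y z. (1 - t) * x + t * y + sqrt (2 * t * (1 - t)) * z)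
           (gauss 0 (sqrt (\<sigma>0 * \<sigma>1)))
           (gauss m0 \<sigma>0) (gauss m1 \<sigma>1)"
proof -
  have F: "(\<lambda>t x y z. (1 - t) * x + t * y + sqrt (2 * t * (1 - t)) * z) = Fi"
    by (simp add: fun_eq_iff Fi_def)
  have s: "0 < sqrt (\<sigma>0 * \<sigma>1)" using assms by simp
  have G: "gen_interpolant p Fi (gauss 0 (sqrt (\<sigma>0 * \<sigma>1)))"
    by (rule gen_interpolant_Fi[OF assms(1,2) s])
  have S: "in_S (induced_space (gauss m0 \<sigma>0) (gauss m1 \<sigma>1) (gauss 0 (sqrt (\<sigma>0 * \<sigma>1)))) (induced_process Fi)
        (gauss m0 \<sigma>0) (gauss m1 \<sigma>1)"
    by (rule in_S_Fi[OF assms(3,4) s])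
  have V: "is_cond_velocity (induced_space (gauss m0 \<sigma>0) (gauss m1 \<sigma>1) (gauss 0 (sqrt (\<sigma>0 * \<sigma>1))))
        (induced_process Fi) (vf m0 m1 \<sigma>0 \<sigma>1)"
    by (rule cond_velocity_Fi[OF assms(3,4)])
  have M: "(\<lambda>(t, x). vf m0 m1 \<sigma>0 \<sigma>1 t x) \<in> borel_measurable (restrict_space borel ({0..1} \<times> UNIV))"
    by (rule vf_measurable)
  have L: "\<exists>L. \<forall>t\<in>{0..1}. L-lipschitz_on UNIV (vf m0 m1 \<sigma>0 \<sigma>1 t)"
    by (rule vf_lipschitz[OF assms(3,4)])
  have E: "\<exists>\<phi>. is_flow (vf m0 m1 \<sigma>0 \<sigma>1) \<phi>"
    using is_flow_phi0[OF assms(3,4)] by blast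
  have U: "\<forall>\<phi>. is_flow (vf m0 m1 \<sigma>0 \<sigma>1) \<phi> \<longrightarrow> second_deriv_zero \<phi>"
    using flow_second_deriv[OF assms(3,4)] by blast
  have ex: "\<exists>v. is_cond_velocity (induced_space (gauss m0 \<sigma>0) (gauss m1 \<sigma>1) (gauss 0 (sqrt (\<sigma>0 * \<sigma>1)))) (induced_process Fi) v \<and>
          (\<lambda>(t, x). v t x) \<in> borel_measurable (restrict_space borel ({0..1} \<times> UNIV)) \<and>
          (\<exists>L. \<forall>t\<in>{0..1}. L-lipschitz_on UNIV (v t)) \<and>
          (\<exists>\<phi>. is_flow v \<phi>) \<and>
          (\<forall>\<phi>. is_flow v \<phi> \<longrightarrow> second_deriv_zero \<phi>)"
    using V M L E U by blast
  show ?thesis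
    unfolding F in_F_SL_def in_S_SL_def
    using G S ex abs_cont_gauss by simp
qed

end
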